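(* Let $n\ge 3$. Let $L$ be a complex Leibniz algebra, let $I$ be the ideal generated by all squares $[x,x]$, $x\in L$, and suppose $L/I\cong\mathfrak{e}(n)$ and $I$ has a basis $X_1,\dots,X_{n+1}$ such that, for the right $\mathfrak{e}(n)$-module structure $(i,x+I)\mapsto[i,x]$, one has $[X_i,\overline{E}_{i,j}]=X_j$ for $1\le i\ne j\le n$, $[X_i,\overline{H}_i]=X_{n+1}$ for $1\le i\le n$, and all other products of $X_1,\dots,X_{n+1}$ with the basis elements $\overline{E}_{i,j},\overline{H}_k$ of $L/I$ are zero. Then there exist preimages $E_{i,j}\in L$ ($1\le i<j\le n$) and $H_k\in L$ ($1\le k\le n$) of $\overline{E}_{i,j}$ and $\overline{H}_k$ whose linear span $\mathfrak{e}(n)\subseteq L$ is closed under the bracket of $L$ and is, with $E_{i,j}\mapsto\overline{E}_{i,j}$, $H_k\mapsto\overline{H}_k$, a subalgebra isomorphic to the Lie algebra $\mathfrak{e}(n)$; that is, $[\mathfrak{e}(n),\mathfrak{e}(n)]=\mathfrak{e}(n)$ for this span, and the brackets among these elements in $L$ are exactly those of $\mathfrak{e}(n)$.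
   Context: A (right) Leibniz algebra is a vector space $L$ with a bilinear bracket satisfying $[[x,y],z]=[[x,z],y]+[x,[y,z]]$. The ideal $I$ generated by squares satisfies $[L,I]=0$, so $L/I$ is a Lie algebra and $I$ is a right $L/I$-module via $(i,x+I)\mapsto[i,x]$. $\mathfrak{e}(n)$ is the complex Lie algebra with basis $\{\overline{E}_{i,j}\ (1\le i<j\le n),\ \overline{H}_k\ (1\le k\le n)\}$; setting $\overline{E}_{j,i}=-\overline{E}_{i,j}$, its nonzero brackets are $[\overline{E}_{i,j},\overline{E}_{j,k}]=\overline{E}_{i,k}$, $[\overline{E}_{i,j},\overline{H}_j]=\overline{H}_i$, $[\overline{E}_{i,j},\overline{H}_i]=-\overline{H}_j$ (matrix realization in $\mathfrak{gl}_{n+1}(\mathbb C)$: $\overline{E}_{i,j}=e_{i,j}-e_{j,i}$, $\overline{H}_k=e_{k,n+1}$); the module above is right multiplication of row vectors, $X_i$ corresponding to the $i$-th standard row vector. *)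

theory Defs
  imports Complex_Main
begin

text \<open>A (right) Leibniz algebra is such a space with a bilinear bracket br satisfying
  br (br x y) z = br (br x z) y + br x (br y z).\<close>

definition leibniz_algebra :: "(complex \<Rightarrow> 'a::ab_group_add \<Rightarrow> 'a) \<Rightarrow> ('a \<Rightarrow> 'a \<Rightarrow> 'a) \<Rightarrow> bool" where
  "leibniz_algebra scale br \<longleftrightarrow>
     vector_space scale \<and>
     (\<forall>x y z. br (x + y) z = br x z + br y z) \<and>
     (\<forall>x y z. br x (y + z) = br x y + br x z) \<and>
     (\<forall>c x y. br (scale c x) y = scale c (br x y)) \<and>
     (\<forall>c x y. br x (scale c y) = scale c (br x y)) \<and>
     (\<forall>x y z. br (br x y) z = br (br x z) y + br x (br y z))"

definition is_ideal :: "(complex \<Rightarrow> 'a::ab_group_add \<Rightarrow> 'a) \<Rightarrow> ('a \<Rightarrow> 'a \<Rightarrow> 'a) \<Rightarrow> 'a set \<Rightarrow> bool" where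
  "is_ideal scale br S \<longleftrightarrow> module.subspace scale S \<and> (\<forall>x\<in>S. \<forall>y. br x y \<in> S \<and> br y x \<in> S)"

definition square_ideal :: "(complex \<Rightarrow> 'a::ab_group_add \<Rightarrow> 'a) \<Rightarrow> ('a \<Rightarrow> 'a \<Rightarrow> 'a) \<Rightarrow> 'a set" where
  "square_ideal scale br = \<Inter>{S. is_ideal scale br S \<and> (\<forall>x. br x x \<in> S)}"

definition ext_E :: "(nat \<Rightarrow> nat \<Rightarrow> 'a::ab_group_add) \<Rightarrow> nat \<Rightarrow> nat \<Rightarrow> 'a" where
  "ext_E E i j = (if i < j then E i j else if j < i then - E j i else 0)"

text \<open>The full multiplication table of e(n) on its basis (E i j, 1 \<le> i < j \<le> n; H k, 1 \<le> k \<le> n),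
  with each equation "lhs = rhs" replaced by "R lhs rhs". It is the commutator table of the
  matrix realization E i j = e_ij - e_ji, H k = e_(k,n+1) in gl_(n+1), i.e. the brackets
  [E_ij,E_jk]=E_ik, [E_ij,H_j]=H_i, [E_ij,H_i]=-H_j, extended by antisymmetry, all others 0.\<close>
definition e_table :: "nat \<Rightarrow> ('a \<Rightarrow> 'a \<Rightarrow> bool) \<Rightarrow> ('a::ab_group_add \<Rightarrow> 'a \<Rightarrow> 'a)
    \<Rightarrow> (nat \<Rightarrow> nat \<Rightarrow> 'a) \<Rightarrow> (nat \<Rightarrow> 'a) \<Rightarrow> bool" where
  "e_table n R br E H \<longleftrightarrow>
     (\<forall>i j k l. 1 \<le> i \<and> i < j \<and> j \<le> n \<and> 1 \<le> k \<and> k < l \<and> l \<le> n \<longrightarrow>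
        R (br (E i j) (E k l))
          ((if j = k then ext_E E i l else 0) - (if j = l then ext_E E i k else 0)
           - (if i = k then ext_E E j l else 0) + (if i = l then ext_E E j k else 0))) \<and>
     (\<forall>i j k. 1 \<le> i \<and> i < j \<and> j \<le> n \<and> 1 \<le> k \<and> k \<le> n \<longrightarrow>
        R (br (E i j) (H k)) ((if j = k then H i else 0) - (if i = k then H j else 0))) \<and>
     (\<forall>i j k. 1 \<le> i \<and> i < j \<and> j \<le> n \<and> 1 \<le> k \<and> k \<le> n \<longrightarrow>
        R (br (H k) (E i j)) ((if i = k then H j else 0) - (if j = k then H i else 0))) \<and>
     (\<forall>k l. 1 \<le> k \<and> k \<le> n \<and> 1 \<le> l \<and> l \<le> n \<longrightarrow> R (br (H k) (H l)) 0)"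

definition e_pairs :: "nat \<Rightarrow> (nat \<times> nat) set" where
  "e_pairs n = {(i, j). 1 \<le> i \<and> i < j \<and> j \<le> n}"

end

theory Submission
  imports Defs
begin

definition apT :: "(nat \<Rightarrow> nat \<Rightarrow> 'a::ab_group_add) \<Rightarrow> nat \<Rightarrow> nat \<Rightarrow> nat \<Rightarrow> nat \<Rightarrow> 'a" where
  "apT f i j k l = (if j = k then f i l else 0) - (if j = l then f i k else 0)
     - (if i = k then f j l else 0) + (if i = l then f j k else 0)"

definition apH :: "(nat \<Rightarrow> 'a::ab_group_add) \<Rightarrow> nat \<Rightarrow> nat \<Rightarrow> nat \<Rightarrow> 'a" where
  "apH f i j k = (if j = k then f i else 0) - (if i = k then f j else 0)"

lemma apT_add: "apT (\<lambda>a b. f a b + g a b) i j k l = apT f i j k l + apT g i j k l"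
  by (simp add: apT_def algebra_simps)
lemma apT_diff: "apT (\<lambda>a b. f a b - g a b) i j k l = apT f i j k l - apT g i j k l"
  by (simp add: apT_def algebra_simps)
lemma apT_zero: "apT (\<lambda>a b. 0) i j k l = 0"
  by (simp add: apT_def)
lemma apH_add: "apH (\<lambda>a. f a + g a) i j k = apH f i j k + apH g i j k"
  by (simp add: apH_def algebra_simps)
lemma apH_diff: "apH (\<lambda>a. f a - g a) i j k = apH f i j k - apH g i j k"
  by (simp add: apH_def algebra_simps)
lemma apH_minus: "apH (\<lambda>a. - f a) i j k = - apH f i j k"
  by (simp add: apH_def algebra_simps)
lemma apH_zero: "apH (\<lambda>a. 0) i j k = 0"
  by (simp add: apH_def)

lemma apT_hom:
  assumes "\<And>x y. F (x + y) = F x + F y"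
  shows "F (apT f i j k l) = apT (\<lambda>a b. F (f a b)) i j k l"
proof -
  have z: "F 0 = 0" using assms[of 0 0] by simp
  have m: "F (- x) = - F x" for x using assms[of x "-x"] z by (metis add.right_inverse minus_unique)
  have d: "F (x - y) = F x - F y" for x y using assms[of x "-y"] m by simp
  show ?thesis by (simp add: apT_def d assms z)
qed

lemma apH_hom:
  assumes "\<And>x y. F (x + y) = F x + F y"
  shows "F (apH f i j k) = apH (\<lambda>a. F (f a)) i j k"
proof -
  have z: "F 0 = 0" using assms[of 0 0] by simp
  have m: "F (- x) = - F x" for x using assms[of x "-x"] z by (metis add.right_inverse minus_unique)
  have d: "F (x - y) = F x - F y" for x y using assms[of x "-y"] m by simp
  show ?thesis by (simp add: apH_def d assms z)
qed


lemma ext_E_swap: "ext_E f b a = - ext_E f a b"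
  by (simp add: ext_E_def)
lemma ext_E_same[simp]: "ext_E f a a = 0"
  by (simp add: ext_E_def)
lemma apH_swap: "apH f b a k = - apH f a b k"
  by (simp add: apH_def)
lemma apT_swap1: "apT f b a c d = - apT f a b c d"
  by (simp add: apT_def)
lemma apT_swap2: "apT f a b d c = - apT f a b c d"
  by (simp add: apT_def)
lemma apH_same[simp]: "apH f a a k = 0"
  by (simp add: apH_def)

definition dA :: "('a \<Rightarrow> 'a \<Rightarrow> 'a) \<Rightarrow> (nat \<Rightarrow> nat \<Rightarrow> 'a::ab_group_add) \<Rightarrow> nat \<Rightarrow> nat \<Rightarrow> nat \<Rightarrow> nat \<Rightarrow> 'a" where
  "dA br e a b c d = br (ext_E e a b) (ext_E e c d) - apT (ext_E e) a b c d"
definition dB :: "('a \<Rightarrow> 'a \<Rightarrow> 'a) \<Rightarrow> (nat \<Rightarrow> nat \<Rightarrow> 'a::ab_group_add) \<Rightarrow> (nat \<Rightarrow> 'a) \<Rightarrow> nat \<Rightarrow> nat \<Rightarrow> nat \<Rightarrow> 'a" where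
  "dB br e h a b k = br (ext_E e a b) (h k) - apH h a b k"
definition dC :: "('a \<Rightarrow> 'a \<Rightarrow> 'a) \<Rightarrow> (nat \<Rightarrow> nat \<Rightarrow> 'a::ab_group_add) \<Rightarrow> (nat \<Rightarrow> 'a) \<Rightarrow> nat \<Rightarrow> nat \<Rightarrow> nat \<Rightarrow> 'a" where
  "dC br e h k a b = br (h k) (ext_E e a b) + apH h a b k"

lemma grp_t1: fixes u x y :: "'a::ab_group_add"
  assumes "- y = - u + x" "- x = u + y" shows "u + u = 0"
proof -
  have a: "u = x + y" using assms(1) by (simp add: algebra_simps)
  have b: "u = - x - y" using assms(2) by (simp add: algebra_simps)
  have "u + u = (x + y) + (- x - y)" using a b by (metis)
  also have "\<dots> = 0" by simp
  finally show ?thesis .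
qed
lemma grp_t3: fixes x y z :: "'a::ab_group_add" assumes "x = - y + z" shows "z = x + y"
  using assms by (simp add: algebra_simps)
lemma grp_t2: fixes s X Y :: "'a::ab_group_add"
  assumes "s + X = Y" "s + Y = X" shows "s + s = 0"
proof -
  have "s + (s + X) = X" using assms by simp
  then have "(s + s) + X = 0 + X" by (simp add: add.assoc)
  then show ?thesis by (rule add_right_imp_eq)
qed

locale setting =
  fixes scale :: "complex \<Rightarrow> 'a::ab_group_add \<Rightarrow> 'a"
    and br :: "'a \<Rightarrow> 'a \<Rightarrow> 'a"
    and n :: nat
    and Eb :: "nat \<Rightarrow> nat \<Rightarrow> 'a" and Hb :: "nat \<Rightarrow> 'a" and X :: "nat \<Rightarrow> 'a"
  assumes n3: "n \<ge> 3"
    and leib: "leibniz_algebra scale br"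
    and quot_span: "module.span scale ((\<lambda>(i, j). Eb i j) ` e_pairs n \<union> Hb ` {1..n}
                       \<union> square_ideal scale br) = UNIV"
    and quot_indep: "\<And>c d. (\<Sum>(i, j)\<in>e_pairs n. scale (c i j) (Eb i j))
                       + (\<Sum>k\<in>{1..n}. scale (d k) (Hb k)) \<in> square_ideal scale br
                     \<Longrightarrow> (\<forall>(i, j)\<in>e_pairs n. c i j = 0) \<and> (\<forall>k\<in>{1..n}. d k = 0)"
    and quot_table: "e_table n (\<lambda>x y. x - y \<in> square_ideal scale br) br Eb Hb"
    and X_inj: "inj_on X {1..n+1}"
    and X_indep: "\<not> module.dependent scale (X ` {1..n+1})"
    and X_span: "module.span scale (X ` {1..n+1}) = square_ideal scale br"
    and X_E: "\<And>m i j. 1 \<le> m \<Longrightarrow> m \<le> n + 1 \<Longrightarrow> (i, j) \<in> e_pairs n \<Longrightarrow>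
               br (X m) (Eb i j) = (if m = i then X j else if m = j then - X i else 0)"
    and X_H: "\<And>m k. 1 \<le> m \<Longrightarrow> m \<le> n + 1 \<Longrightarrow> 1 \<le> k \<Longrightarrow> k \<le> n \<Longrightarrow>
               br (X m) (Hb k) = (if m = k then X (n + 1) else 0)"
begin

interpretation vs: vector_space scale
  using leib unfolding leibniz_algebra_def by blast

abbreviation "I \<equiv> square_ideal scale br"

lemma addL: "br (x + y) z = br x z + br y z"
  using leib unfolding leibniz_algebra_def by blast
lemma addR: "br x (y + z) = br x y + br x z"
  using leib unfolding leibniz_algebra_def by blast
lemma scaleL: "br (scale c x) y = scale c (br x y)"
  using leib unfolding leibniz_algebra_def by blast
lemma scaleR: "br x (scale c y) = scale c (br x y)"
  using leib unfolding leibniz_algebra_def by blast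
lemma leibniz: "br (br x y) z = br (br x z) y + br x (br y z)"
  using leib unfolding leibniz_algebra_def by blast

lemma zeroL[simp]: "br 0 z = 0" using addL[of 0 0 z] by simp
lemma zeroR[simp]: "br x 0 = 0" using addR[of x 0 0] by simp
lemma minusL: "br (- x) z = - br x z" using addL[of x "-x" z] by (metis zeroL add.right_inverse minus_unique)
lemma minusR: "br x (- z) = - br x z" using addR[of x z "-z"] by (metis zeroR add.right_inverse minus_unique)
lemma diffL: "br (x - y) z = br x z - br y z" using addL[of x "-y" z] minusL by simp
lemma diffR: "br x (y - z) = br x y - br x z" using addR[of x y "-z"] minusR by simp
lemma sumL: "br (sum f A) z = (\<Sum>i\<in>A. br (f i) z)"
  by (induct A rule: infinite_finite_induct) (auto simp: addL)
lemma sumR: "br z (sum f A) = (\<Sum>i\<in>A. br z (f i))"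
  by (induct A rule: infinite_finite_induct) (auto simp: addR)

lemma apT_brL: "br (apT f i j k l) z = apT (\<lambda>a b. br (f a b) z) i j k l"
  by (rule apT_hom) (rule addL)
lemma apT_brR: "br z (apT f i j k l) = apT (\<lambda>a b. br z (f a b)) i j k l"
  by (rule apT_hom) (rule addR)
lemma apH_brL: "br (apH f i j k) z = apH (\<lambda>a. br (f a) z) i j k"
  by (rule apH_hom) (rule addL)
lemma apH_brR: "br z (apH f i j k) = apH (\<lambda>a. br z (f a)) i j k"
  by (rule apH_hom) (rule addR)

lemma I_span: "I = vs.span (X ` {1..n+1})" using X_span by simp
lemma I_sub: "vs.subspace I" unfolding I_span by simp
lemma I_0[simp]: "0 \<in> I" using vs.subspace_0[OF I_sub] .
lemma I_add: "x \<in> I \<Longrightarrow> y \<in> I \<Longrightarrow> x + y \<in> I" using vs.subspace_add[OF I_sub] .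
lemma I_diff: "x \<in> I \<Longrightarrow> y \<in> I \<Longrightarrow> x - y \<in> I" using vs.subspace_diff[OF I_sub] .
lemma I_neg: "x \<in> I \<Longrightarrow> - x \<in> I" using vs.subspace_neg[OF I_sub] .
lemma I_scale: "x \<in> I \<Longrightarrow> scale c x \<in> I" using vs.subspace_scale[OF I_sub] .
lemma I_sum: "(\<And>i. i \<in> A \<Longrightarrow> f i \<in> I) \<Longrightarrow> sum f A \<in> I" using vs.subspace_sum[OF I_sub] by blast

lemma I_brL: "i \<in> I \<Longrightarrow> br i y \<in> I"
  unfolding square_ideal_def is_ideal_def by blast

lemma sq_I: "br x x \<in> I"
  unfolding square_ideal_def by blast

lemma brI: assumes "i \<in> I" shows "br x i = 0"
proof -
  let ?Z = "{z. \<forall>x. br x z = 0}"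
  have sub: "vs.subspace ?Z"
    unfolding vs.subspace_def by (auto simp: addR scaleR)
  have id: "is_ideal scale br ?Z"
    unfolding is_ideal_def
  proof (intro conjI sub ballI allI)
    fix z y assume "z \<in> ?Z"
    then have z: "br w z = 0" for w by simp
    show "br z y \<in> ?Z"
    proof (simp, intro allI)
      fix w show "br w (br z y) = 0"
        using leibniz[of w z y] z by (simp add: eq_diff_eq[symmetric] leibniz)
    qed
    show "br y z \<in> ?Z" using z by simp
  qed
  have sq: "br w w \<in> ?Z" for w
    using leibniz[of _ w w] by (auto)
  have "I \<subseteq> ?Z" unfolding square_ideal_def using id sq by blast
  with assms show ?thesis by blast
qed

lemma cong: "y - y' \<in> I \<Longrightarrow> br x y = br x y'"
  using brI[of "y - y'" x] by (simp add: diffR)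

lemma X_I: "m \<in> {1..n+1} \<Longrightarrow> X m \<in> I"
  unfolding I_span by (rule vs.span_base) simp

abbreviation "XN \<equiv> X (Suc n)"

lemma XN_I: "XN \<in> I" using X_I[of "Suc n"] by simp

lemma XN_nz: "XN \<noteq> 0"
proof
  assume "XN = 0"
  then have "0 \<in> X ` {1..n+1}" by (metis Suc_eq_plus1 atLeastAtMost_iff image_eqI le_add2 order_refl)
  then show False using X_indep vs.dependent_zero by blast
qed

lemma rep: assumes "v \<in> I" shows "\<exists>c. v = (\<Sum>m\<in>{1..n+1}. scale (c m) (X m))"
proof -
  have "v \<in> vs.span (X ` {1..n+1})" using assms I_span by simp
  then obtain u where u: "v = (\<Sum>w\<in>X ` {1..n+1}. scale (u w) w)"
    using vs.span_finite[of "X ` {1..n+1}"] by auto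
  also have "\<dots> = (\<Sum>m\<in>{1..n+1}. scale (u (X m)) (X m))"
    by (subst sum.reindex[OF X_inj]) simp
  finally show ?thesis by (intro exI[of _ "\<lambda>m. u (X m)"])
qed

lemma XH: "m \<in> {1..n+1} \<Longrightarrow> k \<in> {1..n} \<Longrightarrow> br (X m) (Hb k) = (if m = k then XN else 0)"
  using X_H[of m k] by auto

lemma rep_H: assumes "k \<in> {1..n}"
  shows "br (\<Sum>m\<in>{1..n+1}. scale (c m) (X m)) (Hb k) = scale (c k) XN"
proof -
  have "br (\<Sum>m\<in>{1..n+1}. scale (c m) (X m)) (Hb k) = (\<Sum>m\<in>{1..n+1}. scale (c m) (br (X m) (Hb k)))"
    by (simp only: sumL scaleL)
  also have "\<dots> = (\<Sum>m\<in>{1..n+1}. scale (c m) (if m = k then XN else 0))"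
    by (rule sum.cong) (auto simp: XH[OF _ assms])
  also have "\<dots> = (\<Sum>m\<in>{1..n+1}. if m = k then scale (c m) XN else 0)"
    by (rule sum.cong) auto
  also have "\<dots> = scale (c k) XN" using assms by (simp add: sum.delta)
  finally show ?thesis .
qed

abbreviation "inV0 v \<equiv> (\<exists>c. v = scale c XN)"

lemma brXN: "br XN y = 0"
proof -
  have y: "y \<in> vs.span ((\<lambda>(i, j). Eb i j) ` e_pairs n \<union> Hb ` {1..n} \<union> I)"
    using quot_span by simp
  show ?thesis
  proof (induct rule: vs.span_induct[OF y])
    case 1 show ?case unfolding vs.subspace_def by (auto simp: addR scaleR)
  next
    case (2 x)
    then show ?case
    proof (elim UnE)
      assume "x \<in> (\<lambda>(i, j). Eb i j) ` e_pairs n"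
      then obtain i j where "(i,j) \<in> e_pairs n" "x = Eb i j" by auto
      then show ?thesis using X_E[of "Suc n" i j] by (auto simp: e_pairs_def)
    next
      assume "x \<in> Hb ` {1..n}"
      then show ?thesis using X_H[of "Suc n"] by auto
    next
      assume "x \<in> I" then show ?thesis using brI by simp
    qed
  qed
qed

lemma V0_kill: "inV0 v \<Longrightarrow> br v y = 0"
  using brXN by (auto simp: scaleL)

lemma V0_I: "inV0 v \<Longrightarrow> v \<in> I" using XN_I I_scale by auto

lemma V0_add: "inV0 v \<Longrightarrow> inV0 w \<Longrightarrow> inV0 (v + w)"
  by (metis vs.scale_left_distrib)
lemma V0_diff: "inV0 v \<Longrightarrow> inV0 w \<Longrightarrow> inV0 (v - w)"
  by (metis vs.scale_left_diff_distrib)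
lemma V0_neg: "inV0 v \<Longrightarrow> inV0 (- v)"
  by (metis vs.scale_minus_left)
lemma V0_0: "inV0 0" by (metis vs.scale_zero_left)

lemma two_zero: "(v::'a) + v = 0 \<Longrightarrow> v = 0"
proof -
  assume "v + v = 0"
  then have "scale (1/2) (v + v) = 0" by simp
  moreover have "scale (1/2) (v + v) = scale (1/2 + 1/2) v"
    by (simp only: vs.scale_right_distrib vs.scale_left_distrib)
  ultimately show "v = 0" by simp
qed

lemma Ih: assumes "v \<in> I" "k \<in> {1..n}" shows "inV0 (br v (Hb k))"
  using rep[OF assms(1)] rep_H[OF assms(2)] by auto

lemma V0_char: assumes "v \<in> I" "\<And>k. k \<in> {1..n} \<Longrightarrow> br v (Hb k) = 0" shows "inV0 v"
proof -
  obtain c where c: "v = (\<Sum>m\<in>{1..n+1}. scale (c m) (X m))" using rep[OF assms(1)] by blast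
  have ck: "c k = 0" if "k \<in> {1..n}" for k
    using assms(2)[OF that] rep_H[OF that, of c] c XN_nz by simp
  have "v = (\<Sum>m\<in>{1..n+1}. if m = Suc n then scale (c m) (X m) else 0)"
    unfolding c by (rule sum.cong) (auto simp: ck)
  also have "\<dots> = scale (c (Suc n)) XN" by (simp add: sum.delta)
  finally show ?thesis by blast
qed

definition cf :: "'a \<Rightarrow> complex" where "cf v = (SOME c. v = scale c XN)"
lemma cf: "inV0 v \<Longrightarrow> v = scale (cf v) XN"
  unfolding cf_def by (rule someI_ex)



lemma e_pairs_fin: "finite (e_pairs n)"
proof -
  have "e_pairs n \<subseteq> {1..n} \<times> {1..n}" unfolding e_pairs_def by auto
  then show ?thesis by (rule finite_subset) simp
qed

lemma third: assumes "a \<in> {1..n}" "b \<in> {1..n}" shows "\<exists>c\<in>{1..n}. c \<noteq> a \<and> c \<noteq> b"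
proof -
  have "1 \<in> {1..n}" "2 \<in> {1..n}" "3 \<in> {1..n}" using n3 by auto
  show ?thesis
  proof (cases "a \<noteq> 1 \<and> b \<noteq> 1")
    case True then show ?thesis using \<open>1 \<in> {1..n}\<close> by (intro bexI[of _ 1]) auto
  next
    case F1: False
    show ?thesis
    proof (cases "a \<noteq> 2 \<and> b \<noteq> 2")
      case True then show ?thesis using \<open>2 \<in> {1..n}\<close> by (intro bexI[of _ 2]) auto
    next
      case False then show ?thesis using F1 \<open>3 \<in> {1..n}\<close> by (intro bexI[of _ 3]) auto
    qed
  qed
qed


lemma apT_mem: assumes S: "vs.subspace S" and f: "\<And>x y. x \<in> {1..n} \<Longrightarrow> y \<in> {1..n} \<Longrightarrow> f x y \<in> S"
  and idx: "a \<in> {1..n}" "b \<in> {1..n}" "c \<in> {1..n}" "d \<in> {1..n}"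
  shows "apT f a b c d \<in> S"
  unfolding apT_def using idx
  by (intro vs.subspace_add[OF S] vs.subspace_diff[OF S]) (auto simp: vs.subspace_0[OF S] f)

lemma apH_mem: assumes S: "vs.subspace S" and f: "\<And>x. x \<in> {1..n} \<Longrightarrow> f x \<in> S"
  and idx: "a \<in> {1..n}" "b \<in> {1..n}"
  shows "apH f a b k \<in> S"
  unfolding apH_def using idx
  by (intro vs.subspace_diff[OF S]) (auto simp: vs.subspace_0[OF S] f)

lemma I_wlog: assumes swap: "\<And>a b. f b a = - f a b"
  and base: "\<And>a b. a < b \<Longrightarrow> a \<in> {1..n} \<Longrightarrow> b \<in> {1..n} \<Longrightarrow> f a b \<in> I"
  and same: "\<And>a. f a a = 0"
  and idx: "a \<in> {1..n}" "b \<in> {1..n}"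
  shows "f a b \<in> I"
proof (cases a b rule: linorder_cases)
  case less then show ?thesis using base idx by blast
next
  case equal then show ?thesis using same by simp
next
  case greater then show ?thesis using base[of b a] idx swap[of a b] I_neg by force
qed

lemma qt_all:
  "(\<forall>i j k l. 1 \<le> i \<and> i < j \<and> j \<le> n \<and> 1 \<le> k \<and> k < l \<and> l \<le> n \<longrightarrow>
        br (Eb i j) (Eb k l) - apT (ext_E Eb) i j k l \<in> I)
  \<and> (\<forall>i j k. 1 \<le> i \<and> i < j \<and> j \<le> n \<and> 1 \<le> k \<and> k \<le> n \<longrightarrow>
        br (Eb i j) (Hb k) - apH Hb i j k \<in> I)
  \<and> (\<forall>i j k. 1 \<le> i \<and> i < j \<and> j \<le> n \<and> 1 \<le> k \<and> k \<le> n \<longrightarrow>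
        br (Hb k) (Eb i j) - ((if i = k then Hb j else 0) - (if j = k then Hb i else 0)) \<in> I)
  \<and> (\<forall>k l. 1 \<le> k \<and> k \<le> n \<and> 1 \<le> l \<and> l \<le> n \<longrightarrow> br (Hb k) (Hb l) - 0 \<in> I)"
  using quot_table unfolding e_table_def apT_def apH_def by assumption

lemmas qt_parts = qt_all[THEN conjunct1] qt_all[THEN conjunct2, THEN conjunct1]
  qt_all[THEN conjunct2, THEN conjunct2, THEN conjunct1] qt_all[THEN conjunct2, THEN conjunct2, THEN conjunct2]

lemma qt1: "1 \<le> i \<Longrightarrow> i < j \<Longrightarrow> j \<le> n \<Longrightarrow> 1 \<le> k \<Longrightarrow> k < l \<Longrightarrow> l \<le> n \<Longrightarrow>
    br (Eb i j) (Eb k l) - apT (ext_E Eb) i j k l \<in> I"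
  using qt_parts(1)[rule_format, of i j k l] by simp
lemma qt2: "1 \<le> i \<Longrightarrow> i < j \<Longrightarrow> j \<le> n \<Longrightarrow> 1 \<le> k \<Longrightarrow> k \<le> n \<Longrightarrow>
    br (Eb i j) (Hb k) - apH Hb i j k \<in> I"
  using qt_parts(2)[rule_format, of i j k] by simp
lemma qt3: "1 \<le> i \<Longrightarrow> i < j \<Longrightarrow> j \<le> n \<Longrightarrow> 1 \<le> k \<Longrightarrow> k \<le> n \<Longrightarrow>
    br (Hb k) (Eb i j) + apH Hb i j k \<in> I"
proof -
  assume a: "1 \<le> i" "i < j" "j \<le> n" "1 \<le> k" "k \<le> n"
  have "br (Hb k) (Eb i j) - ((if i = k then Hb j else 0) - (if j = k then Hb i else 0)) \<in> I"
    using qt_parts(3)[rule_format, of i j k] a by simp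
  moreover have "(if i = k then Hb j else 0) - (if j = k then Hb i else 0) = - apH Hb i j k"
    by (simp add: apH_def)
  ultimately show ?thesis by simp
qed
lemma qt4: "1 \<le> k \<Longrightarrow> k \<le> n \<Longrightarrow> 1 \<le> l \<Longrightarrow> l \<le> n \<Longrightarrow> br (Hb k) (Hb l) \<in> I"
  using qt_parts(4)[rule_format, of k l] by simp


lemma apH_cong: "(\<And>p. p \<in> {1..n} \<Longrightarrow> f p = g p) \<Longrightarrow> a \<in> {1..n} \<Longrightarrow> b \<in> {1..n} \<Longrightarrow> apH f a b k = apH g a b k"
  by (simp add: apH_def)
lemma apT_cong: "(\<And>x y. x \<in> {1..n} \<Longrightarrow> y \<in> {1..n} \<Longrightarrow> f x y = g x y) \<Longrightarrow> a \<in> {1..n} \<Longrightarrow> b \<in> {1..n} \<Longrightarrow>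
    c \<in> {1..n} \<Longrightarrow> d \<in> {1..n} \<Longrightarrow> apT f a b c d = apT g a b c d"
  by (simp add: apT_def)

definition ch :: "nat \<Rightarrow> nat \<Rightarrow> nat" where "ch a b = (SOME c. c \<in> {1..n} \<and> c \<noteq> a \<and> c \<noteq> b)"
lemma ch: assumes "a \<in> {1..n}" "b \<in> {1..n}" shows "ch a b \<in> {1..n}" "ch a b \<noteq> a" "ch a b \<noteq> b"
proof -
  have "\<exists>c. c \<in> {1..n} \<and> c \<noteq> a \<and> c \<noteq> b" using third[OF assms] by blast
  then have "ch a b \<in> {1..n} \<and> ch a b \<noteq> a \<and> ch a b \<noteq> b" unfolding ch_def by (rule someI_ex)
  then show "ch a b \<in> {1..n}" "ch a b \<noteq> a" "ch a b \<noteq> b" by auto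
qed

end

locale lifts = setting +
  fixes e :: "nat \<Rightarrow> nat \<Rightarrow> 'a" and h :: "nat \<Rightarrow> 'a"
  assumes e_lift: "(i, j) \<in> e_pairs n \<Longrightarrow> e i j - Eb i j \<in> square_ideal scale br"
    and h_lift: "k \<in> {1..n} \<Longrightarrow> h k - Hb k \<in> square_ideal scale br"
begin

interpretation vs: vector_space scale
  using leib unfolding leibniz_algebra_def by blast

abbreviation "E' \<equiv> ext_E e"
abbreviation "A \<equiv> dA br e"
abbreviation "B \<equiv> dB br e h"
abbreviation "C \<equiv> dC br e h"
abbreviation "D k l \<equiv> br (h k) (h l)"

lemma E_lift: assumes "a \<in> {1..n}" "b \<in> {1..n}" shows "E' a b - ext_E Eb a b \<in> I"
proof (cases a b rule: linorder_cases)
  case less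
  then have p: "(a, b) \<in> e_pairs n" using assms by (auto simp: e_pairs_def)
  have "E' a b - ext_E Eb a b = e a b - Eb a b" using less by (simp add: ext_E_def)
  then show ?thesis using e_lift[OF p] by simp
next
  case equal then show ?thesis by simp
next
  case greater
  then have p: "(b, a) \<in> e_pairs n" using assms by (auto simp: e_pairs_def)
  have "E' a b - ext_E Eb a b = - (e b a - Eb b a)" using greater by (simp add: ext_E_def)
  then show ?thesis using I_neg[OF e_lift[OF p]] by simp
qed

lemma hE: "a \<in> {1..n} \<Longrightarrow> b \<in> {1..n} \<Longrightarrow> br x (E' a b) = br x (ext_E Eb a b)"
  using E_lift cong by blast
lemma hH: "k \<in> {1..n} \<Longrightarrow> br x (h k) = br x (Hb k)"
  using h_lift cong by blast

lemma A_swap1: "A b a c d = - A a b c d"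
  using ext_E_swap[of e b a] apT_swap1[of "E'" b a c d] by (simp add: dA_def minusL)
lemma A_swap2: "A a b d c = - A a b c d"
  using ext_E_swap[of e d c] apT_swap2[of "E'" a b d c] by (simp add: dA_def minusR)
lemma B_swap: "B b a k = - B a b k"
  using ext_E_swap[of e b a] apH_swap[of h b a k] by (simp add: dB_def minusL)
lemma C_swap: "C k b a = - C k a b"
  using ext_E_swap[of e b a] apH_swap[of h b a k] by (simp add: dC_def minusR)
lemma A_same1[simp]: "A a a c d = 0" by (simp add: dA_def apT_def)
lemma A_same2[simp]: "A a b c c = 0" by (simp add: dA_def apT_def)
lemma B_same[simp]: "B a a k = 0" by (simp add: dB_def)
lemma C_same[simp]: "C k a a = 0" by (simp add: dC_def)


lemma cD: "k \<in> {1..n} \<Longrightarrow> l \<in> {1..n} \<Longrightarrow> D k l \<in> I"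
proof -
  assume a: "k \<in> {1..n}" "l \<in> {1..n}"
  have "D k l = br (h k - Hb k) (Hb l) + br (Hb k) (Hb l)" using hH[OF a(2)] by (simp add: diffL)
  then show ?thesis using I_add I_brL h_lift[OF a(1)] qt4 a by auto
qed

lemma cB: assumes "a \<in> {1..n}" "b \<in> {1..n}" "k \<in> {1..n}" shows "B a b k \<in> I"
proof (rule I_wlog[of "\<lambda>a b. B a b k"])
  show "B b a k = - B a b k" for a b by (rule B_swap)
  show "B a a k = 0" for a by simp
  fix a b assume ab: "a < b" "a \<in> {1..n}" "b \<in> {1..n}"
  have p: "(a, b) \<in> e_pairs n" using ab by (auto simp: e_pairs_def)
  have "B a b k = br (e a b - Eb a b) (Hb k) + (br (Eb a b) (Hb k) - apH Hb a b k) - (apH h a b k - apH Hb a b k)"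
    using ab hH[OF assms(3)] by (simp add: dB_def ext_E_def diffL)
  moreover have "apH h a b k - apH Hb a b k = apH (\<lambda>x. h x - Hb x) a b k" by (simp add: apH_diff)
  moreover have "apH (\<lambda>x. h x - Hb x) a b k \<in> I" by (rule apH_mem[OF I_sub _ ab(2,3)]) (rule h_lift)
  ultimately show "B a b k \<in> I"
    using I_add I_diff I_brL[OF e_lift[OF p]] qt2[of a b k] ab assms(3) by auto
qed (use assms in auto)

lemma cC: assumes "a \<in> {1..n}" "b \<in> {1..n}" "k \<in> {1..n}" shows "C k a b \<in> I"
proof (rule I_wlog[of "\<lambda>a b. C k a b"])
  show "C k b a = - C k a b" for a b by (rule C_swap)
  show "C k a a = 0" for a by simp
  fix a b assume ab: "a < b" "a \<in> {1..n}" "b \<in> {1..n}"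
  have p: "(a, b) \<in> e_pairs n" using ab by (auto simp: e_pairs_def)
  have "C k a b = br (h k - Hb k) (Eb a b) + (br (Hb k) (Eb a b) + apH Hb a b k) + (apH h a b k - apH Hb a b k)"
    using ab hE[OF ab(2,3), of "h k"] by (simp add: dC_def ext_E_def diffL)
  moreover have "apH h a b k - apH Hb a b k = apH (\<lambda>x. h x - Hb x) a b k" by (simp add: apH_diff)
  moreover have "apH (\<lambda>x. h x - Hb x) a b k \<in> I" by (rule apH_mem[OF I_sub _ ab(2,3)]) (rule h_lift)
  ultimately show "C k a b \<in> I"
    using I_add I_diff I_brL[OF h_lift[OF assms(3)]] qt3[of a b k] ab assms(3) by auto
qed (use assms in auto)

lemma cA: assumes "a \<in> {1..n}" "b \<in> {1..n}" "c \<in> {1..n}" "d \<in> {1..n}" shows "A a b c d \<in> I"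
proof (rule I_wlog[of "\<lambda>a b. A a b c d"])
  show "A b a c d = - A a b c d" for a b by (rule A_swap1)
  show "A a a c d = 0" for a by simp
  fix a b assume ab: "a < b" "a \<in> {1..n}" "b \<in> {1..n}"
  show "A a b c d \<in> I"
  proof (rule I_wlog[of "\<lambda>c d. A a b c d"])
    show "A a b d c = - A a b c d" for c d by (rule A_swap2)
    show "A a b c c = 0" for c by simp
    fix c d assume cd: "c < d" "c \<in> {1..n}" "d \<in> {1..n}"
    have p: "(a, b) \<in> e_pairs n" using ab by (auto simp: e_pairs_def)
    have "A a b c d = br (e a b - Eb a b) (Eb c d) + (br (Eb a b) (Eb c d) - apT (ext_E Eb) a b c d)
        - (apT E' a b c d - apT (ext_E Eb) a b c d)"
      using ab cd hE[OF cd(2,3), of "e a b"] by (simp add: dA_def ext_E_def diffL)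
    moreover have "apT E' a b c d - apT (ext_E Eb) a b c d = apT (\<lambda>x y. E' x y - ext_E Eb x y) a b c d"
      by (simp add: apT_diff)
    moreover have "apT (\<lambda>x y. E' x y - ext_E Eb x y) a b c d \<in> I"
      by (rule apT_mem[OF I_sub _ ab(2,3) cd(2,3)]) (rule E_lift)
    ultimately show "A a b c d \<in> I"
      using I_add I_diff I_brL[OF e_lift[OF p]] qt1[of a b c d] ab cd by auto
  qed (use assms in auto)
qed (use assms in auto)

abbreviation "SP \<equiv> vs.span ((\<lambda>(i, j). e i j) ` e_pairs n \<union> h ` {1..n})"

lemma SP_rep: assumes "w \<in> SP"
  shows "\<exists>c d. w = (\<Sum>(i, j)\<in>e_pairs n. scale (c i j) (e i j)) + (\<Sum>k\<in>{1..n}. scale (d k) (h k))"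
  using assms
proof (induct rule: vs.span_induct_alt)
  case base
  show ?case by (intro exI[of _ "\<lambda>i j. 0"] exI[of _ "\<lambda>k. 0"]) simp
next
  case (step c' x y)
  then obtain c d where y: "y = (\<Sum>(i, j)\<in>e_pairs n. scale (c i j) (e i j)) + (\<Sum>k\<in>{1..n}. scale (d k) (h k))"
    by blast
  from step(1) show ?case
  proof (elim UnE)
    assume "x \<in> (\<lambda>(i, j). e i j) ` e_pairs n"
    then obtain i j where ij: "(i, j) \<in> e_pairs n" "x = e i j" by auto
    let ?c = "\<lambda>a b. c a b + (if a = i \<and> b = j then c' else 0)"
    have s1: "(\<Sum>(a, b)\<in>e_pairs n. scale (?c a b) (e a b))
        = (\<Sum>(a, b)\<in>e_pairs n. scale (c a b) (e a b)) + (\<Sum>(a, b)\<in>e_pairs n. scale (if a = i \<and> b = j then c' else 0) (e a b))"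
      by (simp add: vs.scale_left_distrib sum.distrib split_def)
    have "(\<Sum>(a, b)\<in>e_pairs n. scale (if a = i \<and> b = j then c' else 0) (e a b))
        = (\<Sum>p\<in>e_pairs n. if p = (i, j) then scale c' (e i j) else 0)"
    proof (rule sum.cong)
      fix p :: "nat \<times> nat" show "(case p of (a, b) \<Rightarrow> scale (if a = i \<and> b = j then c' else 0) (e a b))
          = (if p = (i, j) then scale c' (e i j) else 0)" by (cases p) auto
    qed simp
    also have "\<dots> = scale c' (e i j)" using ij(1) e_pairs_fin by (simp add: sum.delta')
    finally show ?thesis using s1 y ij by (intro exI[of _ ?c] exI[of _ d]) (simp add: algebra_simps)
  next
    assume "x \<in> h ` {1..n}"
    then obtain k where k: "k \<in> {1..n}" "x = h k" by auto
    let ?d = "\<lambda>a. d a + (if a = k then c' else 0)"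
    have s1: "(\<Sum>a\<in>{1..n}. scale (?d a) (h a))
        = (\<Sum>a\<in>{1..n}. scale (d a) (h a)) + (\<Sum>a\<in>{1..n}. scale (if a = k then c' else 0) (h a))"
      by (simp add: vs.scale_left_distrib sum.distrib)
    have "(\<Sum>a\<in>{1..n}. scale (if a = k then c' else 0) (h a)) = (\<Sum>a\<in>{1..n}. if a = k then scale c' (h k) else 0)"
      by (rule sum.cong) auto
    also have "\<dots> = scale c' (h k)" using k(1) by (simp add: sum.delta)
    finally show ?thesis using s1 y k by (intro exI[of _ c] exI[of _ ?d]) (simp add: algebra_simps)
  qed
qed

lemma SP_I: assumes "w \<in> SP" "w \<in> I" shows "w = 0"
proof -
  obtain c d where w: "w = (\<Sum>(i, j)\<in>e_pairs n. scale (c i j) (e i j)) + (\<Sum>k\<in>{1..n}. scale (d k) (h k))"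
    using SP_rep[OF assms(1)] by blast
  let ?u = "(\<Sum>(i, j)\<in>e_pairs n. scale (c i j) (Eb i j)) + (\<Sum>k\<in>{1..n}. scale (d k) (Hb k))"
  have "w - ?u = (\<Sum>(i, j)\<in>e_pairs n. scale (c i j) (e i j - Eb i j)) + (\<Sum>k\<in>{1..n}. scale (d k) (h k - Hb k))"
    unfolding w by (simp add: split_def vs.scale_right_diff_distrib sum_subtractf algebra_simps)
  also have "\<dots> \<in> I"
  proof (rule I_add; rule I_sum)
    fix p assume "p \<in> e_pairs n"
    then show "(case p of (i, j) \<Rightarrow> scale (c i j) (e i j - Eb i j)) \<in> I"
      by (cases p) (simp add: I_scale e_lift)
  next
    fix k assume "k \<in> {1..n}"
    then show "scale (d k) (h k - Hb k) \<in> I" by (simp add: I_scale h_lift)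
  qed
  finally have "w - ?u \<in> I" .
  then have "w - (w - ?u) \<in> I" by (rule I_diff[OF assms(2)])
  moreover have "w - (w - ?u) = ?u" by simp
  ultimately have "?u \<in> I" by (simp only:)
  from quot_indep[OF this] have "\<forall>(i, j)\<in>e_pairs n. c i j = 0" "\<forall>k\<in>{1..n}. d k = 0" by auto
  then show ?thesis unfolding w by (auto intro!: sum.neutral)
qed

lemma E_SP: "a \<in> {1..n} \<Longrightarrow> b \<in> {1..n} \<Longrightarrow> E' a b \<in> SP"
proof -
  assume ab: "a \<in> {1..n}" "b \<in> {1..n}"
  consider "a < b" | "a = b" | "b < a" by linarith
  then show "E' a b \<in> SP"
  proof cases
    case 1
    then have "(a, b) \<in> e_pairs n" using ab by (auto simp: e_pairs_def)
    then have "e a b \<in> SP" by (intro vs.span_base) force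
    then show ?thesis using 1 by (simp add: ext_E_def)
  next
    case 2 then show ?thesis by (simp add: vs.span_zero)
  next
    case 3
    then have "(b, a) \<in> e_pairs n" using ab by (auto simp: e_pairs_def)
    then have "e b a \<in> SP" by (intro vs.span_base) force
    then show ?thesis using 3 by (simp add: ext_E_def vs.span_neg)
  qed
qed

lemma h_SP: "k \<in> {1..n} \<Longrightarrow> h k \<in> SP"
  by (intro vs.span_base) auto



lemma apT_SP: "(\<And>x y. x \<in> {1..n} \<Longrightarrow> y \<in> {1..n} \<Longrightarrow> f x y \<in> SP) \<Longrightarrow>
   a \<in> {1..n} \<Longrightarrow> b \<in> {1..n} \<Longrightarrow> c \<in> {1..n} \<Longrightarrow> d \<in> {1..n} \<Longrightarrow> apT f a b c d \<in> SP"
  by (rule apT_mem[OF vs.subspace_span])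
lemma apH_SP: "(\<And>x. x \<in> {1..n} \<Longrightarrow> f x \<in> SP) \<Longrightarrow>
   a \<in> {1..n} \<Longrightarrow> b \<in> {1..n} \<Longrightarrow> apH f a b k \<in> SP"
  by (rule apH_mem[OF vs.subspace_span])
lemma hc_SP: "a \<in> {1..n} \<Longrightarrow> b \<in> {1..n} \<Longrightarrow> apH h a b k \<in> SP"
  by (rule apH_SP[OF h_SP])
lemma T_SP: "a \<in> {1..n} \<Longrightarrow> b \<in> {1..n} \<Longrightarrow> c \<in> {1..n} \<Longrightarrow> d \<in> {1..n} \<Longrightarrow> apT E' a b c d \<in> SP"
  by (rule apT_SP[OF E_SP])

lemma sep: assumes "P = V" "P \<in> SP" "V \<in> I" shows "V = 0"
  using SP_I assms by blast

lemma brB: "a \<in> {1..n} \<Longrightarrow> b \<in> {1..n} \<Longrightarrow> k \<in> {1..n} \<Longrightarrow> br x (br (E' a b) (h k)) = br x (apH h a b k)"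
  by (rule cong) (use cB in \<open>simp add: dB_def\<close>)
lemma brC: "a \<in> {1..n} \<Longrightarrow> b \<in> {1..n} \<Longrightarrow> k \<in> {1..n} \<Longrightarrow> br x (br (h k) (E' a b)) = - apH (\<lambda>p. br x (h p)) a b k"
proof -
  assume a: "a \<in> {1..n}" "b \<in> {1..n}" "k \<in> {1..n}"
  have "br x (br (h k) (E' a b)) = br x (- apH h a b k)"
    by (rule cong) (use cC[OF a] in \<open>simp add: dC_def\<close>)
  then show ?thesis by (simp add: minusR apH_brR)
qed
lemma brD: "k \<in> {1..n} \<Longrightarrow> l \<in> {1..n} \<Longrightarrow> br x (br (h k) (h l)) = 0"
  by (rule brI) (rule cD)
lemma brA: "a \<in> {1..n} \<Longrightarrow> b \<in> {1..n} \<Longrightarrow> c \<in> {1..n} \<Longrightarrow> d \<in> {1..n} \<Longrightarrow>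
   br x (br (E' a b) (E' c d)) = br x (apT E' a b c d)"
  by (rule cong) (use cA in \<open>simp add: dA_def\<close>)

lemma EEh: "br (E' a b) (h k) = B a b k + apH h a b k" by (simp add: dB_def)
lemma hEE: "br (h k) (E' a b) = C k a b - apH h a b k" by (simp add: dC_def)
lemma EEE: "br (E' a b) (E' c d) = A a b c d + apT E' a b c d" by (simp add: dA_def)

abbreviation "Sg x k m \<equiv> br (br x (h k)) (h m)"

lemma Sg_sym: "k \<in> {1..n} \<Longrightarrow> m \<in> {1..n} \<Longrightarrow> Sg x k m = Sg x m k"
  using leibniz[of x "h k" "h m"] brD by simp

lemma Sg_eq:
  assumes kill: "\<And>k m y. k \<in> {1..n} \<Longrightarrow> m \<in> {1..n} \<Longrightarrow> br (Sg x k m) y = 0"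
    and idx: "c \<in> {1..n}" "d \<in> {1..n}" "k \<in> {1..n}" "m \<in> {1..n}"
  shows "apH (\<lambda>p. Sg x k p) c d m = Sg (br x (E' c d)) k m - apH (\<lambda>p. Sg x p m) c d k"
proof -
  let ?x = "br x (h k)"
  have "br (br ?x (E' c d)) (h m) = br (Sg x k m) (E' c d) + br ?x (br (E' c d) (h m))"
    by (rule leibniz)
  also have "\<dots> = apH (\<lambda>p. Sg x k p) c d m"
    using kill[OF idx(3,4)] brB[OF idx(1,2,4)] by (simp add: apH_brR)
  finally have 1: "br (br ?x (E' c d)) (h m) = apH (\<lambda>p. Sg x k p) c d m" .
  have "br ?x (E' c d) = br (br x (E' c d)) (h k) + br x (br (h k) (E' c d))"
    by (rule leibniz)
  also have "\<dots> = br (br x (E' c d)) (h k) - apH (\<lambda>p. br x (h p)) c d k"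
    using brC[OF idx(1,2,3)] by simp
  finally have "br (br ?x (E' c d)) (h m) = Sg (br x (E' c d)) k m - apH (\<lambda>p. Sg x p m) c d k"
    by (simp add: diffL apH_brL)
  with 1 show ?thesis by simp
qed

lemma HEE_eq:
  assumes kill: "\<And>k a b y. k \<in> {1..n} \<Longrightarrow> a \<in> {1..n} \<Longrightarrow> b \<in> {1..n} \<Longrightarrow> br (C k a b) y = 0"
    and idx: "k \<in> {1..n}" "p \<in> {1..n}" "q \<in> {1..n}" "r \<in> {1..n}" "s \<in> {1..n}"
  shows "apH (\<lambda>a. C a p q) r s k = apH (\<lambda>a. C a r s) p q k + apT (\<lambda>a b. C k a b) p q r s"
proof -
  let ?V1 = "apH (\<lambda>a. C a r s) p q k" and ?P1 = "apH (\<lambda>a. apH h r s a) p q k"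
  let ?V2 = "apH (\<lambda>a. C a p q) r s k" and ?P2 = "apH (\<lambda>a. apH h p q a) r s k"
  let ?V3 = "apT (\<lambda>a b. C k a b) p q r s" and ?P3 = "apT (\<lambda>a b. apH h a b k) p q r s"
  have L: "br (br (h k) (E' p q)) (E' r s) = - ?V1 + ?P1"
    using kill[OF idx(1,2,3)] by (simp add: hEE diffL apH_brL apH_diff)
  have R1: "br (br (h k) (E' r s)) (E' p q) = - ?V2 + ?P2"
    using kill[OF idx(1,4,5)] by (simp add: hEE diffL apH_brL apH_diff)
  have R2: "br (h k) (br (E' p q) (E' r s)) = ?V3 - ?P3"
    using brA[OF idx(2-5)] by (simp add: apT_brR hEE apT_diff)
  have eq: "- ?V1 + ?P1 = (- ?V2 + ?P2) + (?V3 - ?P3)"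
    using leibniz[of "h k" "E' p q" "E' r s"] L R1 R2 by simp
  have "?P1 - ?P2 + ?P3 = ?V1 - ?V2 + ?V3"
    using eq by (simp add: algebra_simps)
  moreover have "?P1 - ?P2 + ?P3 \<in> SP"
    using idx by (intro vs.span_add vs.span_diff apH_SP apT_SP hc_SP)
  moreover have "?V1 - ?V2 + ?V3 \<in> I"
    using idx cC by (intro I_add I_diff apH_mem[OF I_sub] apT_mem[OF I_sub]) auto
  ultimately have "?V1 - ?V2 + ?V3 = 0" by (rule sep)
  then show ?thesis by (simp add: algebra_simps)
qed

lemma EEE_eq:
  assumes kill: "\<And>a b c d y. a \<in> {1..n} \<Longrightarrow> b \<in> {1..n} \<Longrightarrow> c \<in> {1..n} \<Longrightarrow> d \<in> {1..n} \<Longrightarrow> br (A a b c d) y = 0"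
    and idx: "p \<in> {1..n}" "q \<in> {1..n}" "r \<in> {1..n}" "s \<in> {1..n}" "u \<in> {1..n}" "v \<in> {1..n}"
  shows "apT (\<lambda>a b. A a b u v) p q r s = apT (\<lambda>a b. A a b r s) p q u v + apT (\<lambda>a b. A p q a b) r s u v"
proof -
  let ?V1 = "apT (\<lambda>a b. A a b u v) p q r s" and ?P1 = "apT (\<lambda>a b. apT E' a b u v) p q r s"
  let ?V2 = "apT (\<lambda>a b. A a b r s) p q u v" and ?P2 = "apT (\<lambda>a b. apT E' a b r s) p q u v"
  let ?V3 = "apT (\<lambda>a b. A p q a b) r s u v" and ?P3 = "apT (\<lambda>a b. apT E' p q a b) r s u v"
  have L: "br (br (E' p q) (E' r s)) (E' u v) = ?V1 + ?P1"
    using kill[OF idx(1-4)] by (simp add: EEE addL apT_brL apT_add)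
  have R1: "br (br (E' p q) (E' u v)) (E' r s) = ?V2 + ?P2"
    using kill[OF idx(1,2,5,6)] by (simp add: EEE addL apT_brL apT_add)
  have R2: "br (E' p q) (br (E' r s) (E' u v)) = ?V3 + ?P3"
    using brA[OF idx(3-6)] by (simp add: apT_brR EEE apT_add)
  have eq: "?V1 + ?P1 = (?V2 + ?P2) + (?V3 + ?P3)"
    using leibniz[of "E' p q" "E' r s" "E' u v"] L R1 R2 by simp
  have "?P1 - ?P2 - ?P3 = ?V2 + ?V3 - ?V1"
    using eq by (simp add: algebra_simps)
  moreover have "?P1 - ?P2 - ?P3 \<in> SP"
    using idx by (intro vs.span_add vs.span_diff apT_SP T_SP)
  moreover have "?V2 + ?V3 - ?V1 \<in> I"
    using idx cA by (intro I_add I_diff apT_mem[OF I_sub]) auto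
  ultimately have "?V2 + ?V3 - ?V1 = 0" by (rule sep)
  then show ?thesis by (simp add: algebra_simps)
qed


lemma V0_hk: "v \<in> I \<Longrightarrow> k \<in> {1..n} \<Longrightarrow> inV0 (br v (h k))"
  using Ih hH by simp
lemma kill_hk: "v \<in> I \<Longrightarrow> k \<in> {1..n} \<Longrightarrow> br (br v (h k)) y = 0"
  using V0_hk V0_kill by blast

abbreviation "U q k m \<equiv> Sg (h q) k m"

lemma U_eq: assumes idx: "q \<in> {1..n}" "c \<in> {1..n}" "d \<in> {1..n}" "k \<in> {1..n}" "m \<in> {1..n}"
  shows "apH (\<lambda>p. U q k p) c d m = - apH (\<lambda>p. U p k m) c d q - apH (\<lambda>p. U q p m) c d k"
proof -
  have kill: "br (U q k' m') y = 0" if "k' \<in> {1..n}" "m' \<in> {1..n}" for k' m' y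
    using kill_hk[OF cD[OF idx(1) that(1)] that(2)] .
  have "Sg (br (h q) (E' c d)) k m = Sg (C q c d) k m - apH (\<lambda>p. U p k m) c d q"
    by (simp add: hEE diffL apH_brL)
  also have "Sg (C q c d) k m = 0"
    using kill_hk[OF cC[OF idx(2,3,1)] idx(4)] by simp
  finally show ?thesis using Sg_eq[of "h q", OF kill idx(2-5)] by simp
qed

lemma U_a: assumes idx: "q \<in> {1..n}" "c \<in> {1..n}" "d \<in> {1..n}" and ne: "q \<noteq> c" "q \<noteq> d" "c \<noteq> d"
  shows "U q c d = 0"
proof -
  have "- U q c d = U q d c"
    using U_eq[OF idx(1,2,3,2,2)] ne by (simp add: apH_def)
  then have "U q c d + U q c d = 0" using Sg_sym[OF idx(2,3)] by (simp add: add_eq_0_iff)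
  then show ?thesis by (rule two_zero)
qed

lemma U_b: assumes idx: "q \<in> {1..n}" "k \<in> {1..n}" and ne: "q \<noteq> k"
  shows "U q k k = 0"
proof -
  let ?c = "ch q k"
  have c: "?c \<in> {1..n}" "?c \<noteq> q" "?c \<noteq> k" using ch[OF idx] by auto
  show ?thesis
    using U_eq[OF c(1) c(1) idx(1) idx(2) idx(2)] ne c by (simp add: apH_def)
qed

lemma U_c: assumes idx: "q \<in> {1..n}" "m \<in> {1..n}" and ne: "q \<noteq> m"
  shows "U q q m = 0"
proof -
  have "- U q q m = U m q q + U q m q"
    using U_eq[OF idx(1) idx(1) idx(2) idx(1) idx(1)] ne by (simp add: apH_def)
  then have "- U q q m = U q q m" using U_b[OF idx(2,1)] ne Sg_sym[OF idx(2,1)] by simp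
  then have "U q q m + U q q m = 0" by (simp add: add_eq_0_iff)
  then show ?thesis by (rule two_zero)
qed

lemma U_d: assumes idx: "q \<in> {1..n}" shows "U q q q = 0"
proof -
  let ?d = "ch q q"
  have d: "?d \<in> {1..n}" "?d \<noteq> q" using ch[OF idx idx] by auto
  have "U q q q = U ?d q ?d + U q ?d ?d"
    using U_eq[OF idx(1) idx(1) d(1) idx(1) d(1)] d by (simp add: apH_def)
  moreover have "U ?d q ?d = 0" using Sg_sym[OF idx d(1)] U_c[OF d(1) idx] d by simp
  moreover have "U q ?d ?d = 0" using U_b[OF idx d(1)] d by simp
  ultimately show ?thesis by simp
qed

lemma U_zero: assumes idx: "q \<in> {1..n}" "k \<in> {1..n}" "m \<in> {1..n}" shows "U q k m = 0"
proof -
  consider "q = k" "k = m" | "q = k" "k \<noteq> m" | "q \<noteq> k" "q = m" | "q \<noteq> k" "k = m" | "q \<noteq> k" "q \<noteq> m" "k \<noteq> m"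
    by blast
  then show ?thesis
  proof cases
    case 1 then show ?thesis using U_d[OF idx(1)] by simp
  next
    case 2 then show ?thesis using U_c[OF idx(1,3)] by simp
  next
    case 3 then show ?thesis using U_c[OF idx(1,2)] Sg_sym[OF idx(2,3)] by simp
  next
    case 4 then show ?thesis using U_b[OF idx(1,2)] by simp
  next
    case 5 then show ?thesis using U_a[OF idx] by simp
  qed
qed

lemma D_V0: assumes "k \<in> {1..n}" "l \<in> {1..n}" shows "inV0 (D k l)"
proof (rule V0_char)
  show "D k l \<in> I" using cD assms .
  fix m assume m: "m \<in> {1..n}"
  show "br (D k l) (Hb m) = 0" using U_zero[OF assms m] hH[OF m] by simp
qed


context
  assumes Dz: "\<And>k l. k \<in> {1..n} \<Longrightarrow> l \<in> {1..n} \<Longrightarrow> D k l = 0"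
begin

lemma C_V0: assumes idx: "k \<in> {1..n}" "a \<in> {1..n}" "b \<in> {1..n}" shows "inV0 (C k a b)"
proof (rule V0_char)
  show "C k a b \<in> I" using cC idx by simp
  fix m assume m: "m \<in> {1..n}"
  have "br (br (h k) (E' a b)) (h m) = br (D k m) (E' a b) + br (h k) (br (E' a b) (h m))"
    by (rule leibniz)
  also have "\<dots> = apH (\<lambda>p. D k p) a b m"
    using Dz[OF idx(1) m] brB[OF idx(2,3) m] by (simp add: apH_brR)
  also have "\<dots> = 0" using Dz idx by (simp add: apH_def)
  finally have 1: "br (br (h k) (E' a b)) (h m) = 0" .
  have 2: "br (apH h a b k) (h m) = 0"
    using Dz idx m by (simp add: apH_brL apH_def minusL diffL)
  show "br (C k a b) (Hb m) = 0"
    using 1 2 hH[OF m] by (simp add: dC_def addL)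
qed

lemma C_kill: "k \<in> {1..n} \<Longrightarrow> a \<in> {1..n} \<Longrightarrow> b \<in> {1..n} \<Longrightarrow> br (C k a b) y = 0"
  using C_V0 V0_kill by blast

lemma X_ii: assumes idx: "a \<in> {1..n}" "b \<in> {1..n}" "c \<in> {1..n}" and ne: "a \<noteq> b" "a \<noteq> c" "b \<noteq> c"
  shows "C c c b = C a a b"
  using HEE_eq[OF C_kill, of a a c c b] idx ne by (simp add: apH_def apT_def)

lemma X_iv: assumes idx: "a \<in> {1..n}" "b \<in> {1..n}" "c \<in> {1..n}" and ne: "a \<noteq> b" "a \<noteq> c" "b \<noteq> c"
  shows "C c a b = - C b a c - C a c b"
proof -
  have "- C b a c = C a c b + C c a b"
    using HEE_eq[OF C_kill, of c a c c b] idx ne by (simp add: apH_def apT_def)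
  then show ?thesis by (simp add: algebra_simps)
qed

lemma X_iv': assumes idx: "x \<in> {1..n}" "y \<in> {1..n}" "z \<in> {1..n}" and ne: "x \<noteq> y" "x \<noteq> z" "y \<noteq> z"
  shows "C x y z = C y z x + C z x y"
  using X_iv[of y z x] idx ne C_swap[of z y x] C_swap[of y x z] by (simp add: algebra_simps)

lemma X_cyc: assumes idx: "a \<in> {1..n}" "b \<in> {1..n}" "c \<in> {1..n}" and ne: "a \<noteq> b" "a \<noteq> c" "b \<noteq> c"
  shows "C c a b = 0"
proof -
  have 1: "C a b c = C b c a + C c a b" using X_iv'[of a b c] idx ne by simp
  have 2: "C b c a = C c a b + C a b c" using X_iv'[of b c a] idx ne by simp
  have "C c a b + C c a b = 0" using 1 2 by (simp add: algebra_simps)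
  then show ?thesis by (rule two_zero)
qed

abbreviation "Gv b \<equiv> C (ch b b) (ch b b) b"

lemma G_eq: assumes idx: "a \<in> {1..n}" "b \<in> {1..n}" and ne: "a \<noteq> b" shows "C a a b = Gv b"
proof -
  have c: "ch b b \<in> {1..n}" "ch b b \<noteq> b" using ch[OF idx(2) idx(2)] by auto
  show ?thesis
  proof (cases "ch b b = a")
    case True then show ?thesis by simp
  next
    case False
    then show ?thesis using X_ii[OF idx(1,2) c(1)] ne c by simp
  qed
qed

lemma C_form: assumes idx: "k \<in> {1..n}" "a \<in> {1..n}" "b \<in> {1..n}"
  shows "C k a b = - apH Gv a b k"
proof (cases "a = b")
  case True then show ?thesis by simp
next
  case ne: False
  consider "k = a" | "k = b" | "k \<noteq> a" "k \<noteq> b" by blast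
  then show ?thesis
  proof cases
    case 1 then show ?thesis using G_eq[OF idx(2,3) ne] ne by (simp add: apH_def)
  next
    case 2 then show ?thesis using G_eq[OF idx(3,2)] ne C_swap[of b a b] by (simp add: apH_def)
  next
    case 3 then show ?thesis using X_cyc[OF idx(2,3,1)] ne by (simp add: apH_def)
  qed
qed

end


context
  assumes Dz: "\<And>k l. k \<in> {1..n} \<Longrightarrow> l \<in> {1..n} \<Longrightarrow> D k l = 0"
begin

abbreviation "sg a b k m \<equiv> Sg (E' a b) k m"

lemma hc_h0: "a \<in> {1..n} \<Longrightarrow> b \<in> {1..n} \<Longrightarrow> m \<in> {1..n} \<Longrightarrow> br (apH h a b k) (h m) = 0"
  using Dz by (simp add: apH_brL apH_def minusL diffL)

lemma sg_B: assumes idx: "a \<in> {1..n}" "b \<in> {1..n}" "k \<in> {1..n}" "m \<in> {1..n}"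
  shows "sg a b k m = br (B a b k) (h m)"
  using hc_h0[OF idx(1,2,4)] by (simp add: EEh addL)

lemma sg_kill: "a \<in> {1..n} \<Longrightarrow> b \<in> {1..n} \<Longrightarrow> k \<in> {1..n} \<Longrightarrow> m \<in> {1..n} \<Longrightarrow> br (sg a b k m) y = 0"
  using sg_B kill_hk cB by simp

lemma sg_swap: "sg b a k m = - sg a b k m"
  using ext_E_swap[of e b a] by (simp add: minusL)

lemma sg_eq: assumes idx: "a \<in> {1..n}" "b \<in> {1..n}" "c \<in> {1..n}" "d \<in> {1..n}" "k \<in> {1..n}" "m \<in> {1..n}"
  shows "apH (\<lambda>p. sg a b k p) c d m = apT (\<lambda>x y. sg x y k m) a b c d - apH (\<lambda>p. sg a b p m) c d k"
proof -
  have "Sg (br (E' a b) (E' c d)) k m = Sg (A a b c d) k m + apT (\<lambda>x y. sg x y k m) a b c d"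
    by (simp add: EEE addL apT_brL)
  also have "Sg (A a b c d) k m = 0" using kill_hk[OF cA[OF idx(1-4)] idx(5)] by simp
  finally show ?thesis using Sg_eq[of "E' a b", OF sg_kill[OF idx(1,2)] idx(3-6)] by simp
qed

lemma s1a: assumes idx: "a \<in> {1..n}" "b \<in> {1..n}" and ne: "a \<noteq> b" shows "sg a b a b = 0"
proof -
  have "sg a b b a = - sg a b a b"
    using sg_eq[OF idx idx idx(2) idx(2)] ne by (simp add: apH_def apT_def)
  then have "sg a b a b + sg a b a b = 0" using Sg_sym[OF idx] by (simp add: add_eq_0_iff)
  then show ?thesis by (rule two_zero)
qed

lemma s1b: assumes idx: "a \<in> {1..n}" "b \<in> {1..n}" and ne: "a \<noteq> b" shows "sg a b b b = sg a b a a"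
  using sg_eq[OF idx idx idx(2) idx(1)] ne by (simp add: apH_def apT_def)

lemma s1c: assumes idx: "a \<in> {1..n}" "b \<in> {1..n}" "m \<in> {1..n}" and ne: "a \<noteq> b" "m \<noteq> a" "m \<noteq> b"
  shows "sg a b a m = 0"
  using sg_eq[OF idx(1,2) idx(1,2) idx(2) idx(3)] ne by (simp add: apH_def apT_def)

lemma s1d: assumes idx: "a \<in> {1..n}" "b \<in> {1..n}" "m \<in> {1..n}" and ne: "a \<noteq> b" "m \<noteq> a" "m \<noteq> b"
  shows "sg a b b m = 0"
  using sg_eq[OF idx(1,2) idx(1,2) idx(1) idx(3)] ne by (simp add: apH_def apT_def)

lemma s2a: assumes idx: "a \<in> {1..n}" "b \<in> {1..n}" "d \<in> {1..n}" and ne: "a \<noteq> b" "a \<noteq> d" "b \<noteq> d"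
  shows "sg a d d d = 0"
proof -
  have "sg a b d b = sg a d d d - sg a b b d"
    using sg_eq[OF idx(1,2) idx(2,3) idx(3) idx(3)] ne by (simp add: apH_def apT_def)
  moreover have "sg a b b d = 0" using s1d[OF idx(1,2,3)] ne by simp
  moreover have "sg a b d b = 0" using Sg_sym[OF idx(3,2)] s1d[OF idx(1,2,3)] ne by simp
  ultimately show ?thesis by simp
qed

lemma s2b: assumes idx: "a \<in> {1..n}" "b \<in> {1..n}" "d \<in> {1..n}" and ne: "a \<noteq> b" "a \<noteq> d" "b \<noteq> d"
  shows "sg a d b b = 0"
proof -
  have "- sg a b b d = sg a d b b + sg a b d b"
    using sg_eq[OF idx(1,2) idx(2,3) idx(2) idx(2)] ne by (simp add: apH_def apT_def)
  moreover have "sg a b b d = 0" using s1d[OF idx(1,2,3)] ne by simp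
  moreover have "sg a b d b = 0" using Sg_sym[OF idx(3,2)] s1d[OF idx(1,2,3)] ne by simp
  ultimately show ?thesis by simp
qed

lemma s2c: assumes idx: "a \<in> {1..n}" "b \<in> {1..n}" "d \<in> {1..n}" "m \<in> {1..n}"
  and ne: "a \<noteq> b" "a \<noteq> d" "b \<noteq> d" "m \<noteq> a" "m \<noteq> b" "m \<noteq> d"
  shows "sg a d b m = - sg a b d m"
proof -
  have "0 = sg a d b m + sg a b d m"
    using sg_eq[OF idx(1,2) idx(2,3) idx(2) idx(4)] ne by (simp add: apH_def apT_def)
  then show ?thesis by (simp add: eq_neg_iff_add_eq_0)
qed

lemma sg_zero: assumes idx: "p \<in> {1..n}" "q \<in> {1..n}" "k \<in> {1..n}" "m \<in> {1..n}"
  shows "sg p q k m = 0"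
proof (cases "p = q")
  case True then show ?thesis by simp
next
  case pq: False
  show ?thesis
  proof (cases "k = m")
    case km: True
    consider "k = q" | "k = p" | "k \<noteq> p" "k \<noteq> q" by blast
    then show ?thesis
    proof cases
      case 1
      let ?b = "ch p q"
      have b: "?b \<in> {1..n}" "?b \<noteq> p" "?b \<noteq> q" using ch[OF idx(1,2)] by auto
      show ?thesis using s2a[OF idx(1) b(1) idx(2)] b pq 1 km by simp
    next
      case 2
      let ?b = "ch p q"
      have b: "?b \<in> {1..n}" "?b \<noteq> p" "?b \<noteq> q" using ch[OF idx(1,2)] by auto
      have "sg p q q q = 0" using s2a[OF idx(1) b(1) idx(2)] b pq by simp
      then show ?thesis using s1b[OF idx(1,2) pq] 2 km by simp
    next
      case 3 then show ?thesis using s2b[OF idx(1,3,2)] pq km by simp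
    qed
  next
    case km: False
    consider "k = p" "m = q" | "k = q" "m = p" | "k = p" "m \<noteq> q" | "k = q" "m \<noteq> p"
      | "m = p" "k \<noteq> q" | "m = q" "k \<noteq> p" | "k \<noteq> p" "k \<noteq> q" "m \<noteq> p" "m \<noteq> q" by blast
    then show ?thesis
    proof cases
      case 1 then show ?thesis using s1a[OF idx(1,2) pq] by simp
    next
      case 2 then show ?thesis using s1a[OF idx(1,2) pq] Sg_sym[OF idx(2,1)] by simp
    next
      case 3 then show ?thesis using s1c[OF idx(1,2,4)] pq km by simp
    next
      case 4 then show ?thesis using s1d[OF idx(1,2,4)] pq km by simp
    next
      case 5 then show ?thesis using s1c[OF idx(1,2,3)] Sg_sym[OF idx(3,4)] pq km by simp
    next
      case 6 then show ?thesis using s1d[OF idx(1,2,3)] Sg_sym[OF idx(3,4)] pq km by simp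
    next
      case 7
      have r1: "sg p q k m = - sg p k q m" using s2c[OF idx(1,3,2,4)] 7 pq km by simp
      have r2: "sg p k m q = - sg p m k q" using s2c[OF idx(1,4,3,2)] 7 pq km by simp
      have r3: "sg p m q k = - sg p q m k" using s2c[OF idx(1,2,4,3)] 7 pq km by simp
      have "sg p q k m = - sg p q k m"
        using r1 r2 r3 Sg_sym[OF idx(2,4), of "E' p k"] Sg_sym[OF idx(2,3), of "E' p m"] Sg_sym[OF idx(3,4), of "E' p q"]
        by simp
      then have "sg p q k m + sg p q k m = 0" by (simp add: eq_neg_iff_add_eq_0)
      then show ?thesis by (rule two_zero)
    qed
  qed
qed

lemma B_V0: assumes idx: "a \<in> {1..n}" "b \<in> {1..n}" "k \<in> {1..n}" shows "inV0 (B a b k)"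
proof (rule V0_char)
  show "B a b k \<in> I" using cB idx by simp
  fix m assume m: "m \<in> {1..n}"
  show "br (B a b k) (Hb m) = 0" using sg_zero[OF idx m] sg_B[OF idx m] hH[OF m] by simp
qed

end


context
  assumes Dz: "\<And>k l. k \<in> {1..n} \<Longrightarrow> l \<in> {1..n} \<Longrightarrow> D k l = 0"
    and Cz: "\<And>k a b. k \<in> {1..n} \<Longrightarrow> a \<in> {1..n} \<Longrightarrow> b \<in> {1..n} \<Longrightarrow> C k a b = 0"
    and Bz: "\<And>a b k. a \<in> {1..n} \<Longrightarrow> b \<in> {1..n} \<Longrightarrow> k \<in> {1..n} \<Longrightarrow> B a b k = 0"
begin

lemma Eh_ex: "a \<in> {1..n} \<Longrightarrow> b \<in> {1..n} \<Longrightarrow> k \<in> {1..n} \<Longrightarrow> br (E' a b) (h k) = apH h a b k"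
  using Bz[of a b k] by (simp add: dB_def)
lemma hE_ex: "a \<in> {1..n} \<Longrightarrow> b \<in> {1..n} \<Longrightarrow> k \<in> {1..n} \<Longrightarrow> br (h k) (E' a b) = - apH h a b k"
  using Cz[of k a b] by (simp add: dC_def eq_neg_iff_add_eq_0)

lemma A_V0: assumes idx: "a \<in> {1..n}" "b \<in> {1..n}" "c \<in> {1..n}" "d \<in> {1..n}" shows "inV0 (A a b c d)"
proof (rule V0_char)
  show "A a b c d \<in> I" using cA idx by simp
  fix m assume m: "m \<in> {1..n}"
  let ?P = "apH (\<lambda>p. - apH h c d p) a b m + apH (\<lambda>p. apH h a b p) c d m - apT (\<lambda>x y. apH h x y m) a b c d"
  have 1: "br (br (E' a b) (E' c d)) (h m) = apH (\<lambda>p. - apH h c d p) a b m + apH (\<lambda>p. apH h a b p) c d m"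
  proof -
    have "br (br (E' a b) (E' c d)) (h m) = br (br (E' a b) (h m)) (E' c d) + br (E' a b) (br (E' c d) (h m))"
      by (rule leibniz)
    also have "br (br (E' a b) (h m)) (E' c d) = apH (\<lambda>p. br (h p) (E' c d)) a b m"
      using Eh_ex[OF idx(1,2) m] by (simp add: apH_brL)
    also have "\<dots> = apH (\<lambda>p. - apH h c d p) a b m"
      by (rule apH_cong[OF _ idx(1,2)]) (erule hE_ex[OF idx(3,4)])
    also have "br (E' a b) (br (E' c d) (h m)) = apH (\<lambda>p. br (E' a b) (h p)) c d m"
      using Eh_ex[OF idx(3,4) m] by (simp add: apH_brR)
    also have "\<dots> = apH (\<lambda>p. apH h a b p) c d m"
      by (rule apH_cong[OF _ idx(3,4)]) (erule Eh_ex[OF idx(1,2)])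
    finally show ?thesis .
  qed
  have 2: "br (apT E' a b c d) (h m) = apT (\<lambda>x y. apH h x y m) a b c d"
    by (simp add: apT_brL) (rule apT_cong[OF _ idx], rule Eh_ex, assumption, assumption, rule m)
  have eq: "?P = br (A a b c d) (h m)" using 1 2 by (simp add: dA_def diffL)
  have "br (A a b c d) (h m) = 0"
  proof (rule sep[OF eq])
    have p1: "apH (\<lambda>p. - apH h c d p) a b m \<in> SP"
      by (rule apH_SP[OF _ idx(1,2)]) (rule vs.span_neg, rule hc_SP[OF idx(3,4)])
    have p2: "apH (\<lambda>p. apH h a b p) c d m \<in> SP"
      by (rule apH_SP[OF _ idx(3,4)]) (rule hc_SP[OF idx(1,2)])
    have p3: "apT (\<lambda>x y. apH h x y m) a b c d \<in> SP"
      by (rule apT_SP[OF _ idx]) (rule hc_SP)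
    show "?P \<in> SP" by (rule vs.span_diff[OF vs.span_add[OF p1 p2] p3])
    show "br (A a b c d) (h m) \<in> I" by (rule V0_I[OF V0_hk[OF cA[OF idx] m]])
  qed
  then show "br (A a b c d) (Hb m) = 0" using hH[OF m] by simp
qed

lemma A_kill: "a \<in> {1..n} \<Longrightarrow> b \<in> {1..n} \<Longrightarrow> c \<in> {1..n} \<Longrightarrow> d \<in> {1..n} \<Longrightarrow> br (A a b c d) y = 0"
  using A_V0 V0_kill by blast

lemmas cyc = EEE_eq[OF A_kill]

lemma A_r2: assumes idx: "x \<in> {1..n}" "y \<in> {1..n}" "z \<in> {1..n}" and ne: "x \<noteq> y" "x \<noteq> z" "y \<noteq> z"
  shows "A x z x y = - A x y x z"
proof -
  have "A x z x y = A x y z x"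
    using cyc[of x y y z x y] idx ne by (simp add: apT_def)
  then show ?thesis using A_swap2[of x y z x] by simp
qed

lemma A_r3: assumes idx: "a \<in> {1..n}" "b \<in> {1..n}" "c \<in> {1..n}" "d \<in> {1..n}"
  and ne: "a \<noteq> b" "a \<noteq> c" "a \<noteq> d" "b \<noteq> c" "b \<noteq> d" "c \<noteq> d"
  shows "A a c c d = A a b b d"
  using cyc[of a b b c c d] idx ne by (simp add: apT_def)

lemma A_t: assumes idx: "a \<in> {1..n}" "b \<in> {1..n}" "c \<in> {1..n}" and ne: "a \<noteq> b" "a \<noteq> c" "b \<noteq> c"
  shows "A b c b c + A a c a c = A a b a b"
proof -
  have "- A b c c b = - A a c a c + A a b a b"
    using cyc[of a b a c c b] idx ne by (simp add: apT_def)
  then show ?thesis using A_swap2[of b c b c] by (simp add: algebra_simps)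
qed

lemma A_r1: assumes idx: "a \<in> {1..n}" "b \<in> {1..n}" and ne: "a \<noteq> b" shows "A a b a b = 0"
proof -
  let ?c = "ch a b"
  have c: "?c \<in> {1..n}" "?c \<noteq> a" "?c \<noteq> b" using ch[OF idx] by auto
  have 1: "A a b a b + A ?c b ?c b = A ?c a ?c a" using A_t[OF c(1) idx] c ne by simp
  have 2: "A b a b a + A ?c a ?c a = A ?c b ?c b" using A_t[OF c(1) idx(2,1)] c ne by simp
  have 3: "A b a b a = A a b a b" using A_swap1[of a b b a] A_swap2[of a b a b] by simp
  have "A a b a b + A a b a b = 0" using 1 2 3 by (intro grp_t2[of "A a b a b" "A ?c b ?c b" "A ?c a ?c a"]) simp_all
  then show ?thesis by (rule two_zero)
qed

lemma A_rel: assumes idx: "a \<in> {1..n}" "b \<in> {1..n}" "c \<in> {1..n}" "d \<in> {1..n}"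
  and ne: "a \<noteq> b" "a \<noteq> c" "a \<noteq> d" "b \<noteq> c" "b \<noteq> d" "c \<noteq> d"
  shows "A a b c d = A b c a d + A b d c a"
proof -
  have "A b c a d = - A b d c a + A a b c d"
    using cyc[of a b c a a d] idx ne by (simp add: apT_def)
  then show ?thesis by (rule grp_t3)
qed

lemma A_r4: assumes idx: "a \<in> {1..n}" "b \<in> {1..n}" "c \<in> {1..n}" "d \<in> {1..n}"
  and ne: "a \<noteq> b" "a \<noteq> c" "a \<noteq> d" "b \<noteq> c" "b \<noteq> d" "c \<noteq> d"
  shows "A a b c d = 0"
proof -
  have 1: "A d a b c = A a b d c + A a c b d" using A_rel[of d a b c] idx ne by simp
  have 2: "A c a b d = A a b c d + A a d b c" using A_rel[of c a b d] idx ne by simp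
  have s1: "A d a b c = - A a d b c" by (rule A_swap1)
  have s2: "A a b d c = - A a b c d" by (rule A_swap2)
  have s3: "A c a b d = - A a c b d" by (rule A_swap1)
  have e1: "- A a d b c = - A a b c d + A a c b d" using 1 unfolding s1 s2 .
  have e2: "- A a c b d = A a b c d + A a d b c" using 2 unfolding s3 .
  have "A a b c d + A a b c d = 0" by (rule grp_t1[OF e1 e2])
  then show ?thesis by (rule two_zero)
qed

abbreviation "Fv a d \<equiv> A a (ch a d) (ch a d) d"

lemma A_G: assumes idx: "a \<in> {1..n}" "b \<in> {1..n}" "d \<in> {1..n}" and ne: "a \<noteq> b" "a \<noteq> d" "b \<noteq> d"
  shows "A a b b d = Fv a d"
proof -
  have c: "ch a d \<in> {1..n}" "ch a d \<noteq> a" "ch a d \<noteq> d" by (rule ch[OF idx(1,3)])+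
  show ?thesis
  proof (cases "ch a d = b")
    case True then show ?thesis by (simp only:)
  next
    case False
    have "A a (ch a d) (ch a d) d = A a b b d" by (rule A_r3[OF idx(1,2) c(1) idx(3)]) (use ne c False in auto)
    then show ?thesis by (rule sym)
  qed
qed

lemma A_anti: assumes idx: "a \<in> {1..n}" "b \<in> {1..n}" "d \<in> {1..n}" and ne: "a \<noteq> b" "a \<noteq> d" "b \<noteq> d"
  shows "A a b b d = - A d b b a"
proof -
  have "A a b b d = - A b a b d" by (rule A_swap1)
  also have "A b a b d = - A b d b a" using A_r2[of b d a] idx ne by simp
  also have "A b d b a = - A d b b a" by (rule A_swap1)
  finally show ?thesis by simp
qed

lemma extF: assumes idx: "x \<in> {1..n}" "y \<in> {1..n}" "b \<in> {1..n}" and ne: "x \<noteq> y" "b \<noteq> x" "b \<noteq> y"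
  shows "ext_E (\<lambda>a d. Fv a d) x y = A x b b y"
proof (cases "x < y")
  case True
  have g: "A x b b y = Fv x y" by (rule A_G[OF idx(1,3,2)]) (use ne in auto)
  have "ext_E (\<lambda>a d. Fv a d) x y = Fv x y" using True by (simp add: ext_E_def)
  then show ?thesis using g by (simp only:)
next
  case False
  then have "y < x" using ne by simp
  then have 1: "ext_E (\<lambda>a d. Fv a d) x y = - Fv y x" by (simp add: ext_E_def)
  have g: "A y b b x = Fv y x" by (rule A_G[OF idx(2,3,1)]) (use ne in auto)
  have 3: "A y b b x = - A x b b y" by (rule A_anti[OF idx(2,3,1)]) (use ne in auto)
  have "Fv y x = - A x b b y" using g 3 by simp
  then show ?thesis using 1 by simp
qed

lemma A_form: assumes idx: "p \<in> {1..n}" "q \<in> {1..n}" "r \<in> {1..n}" "s \<in> {1..n}"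
  shows "A p q r s = apT (ext_E (\<lambda>a d. Fv a d)) p q r s"
proof (cases "p = q \<or> r = s")
  case True then show ?thesis by (auto simp: apT_def)
next
  case False
  then have pq: "p \<noteq> q" and rs: "r \<noteq> s" by auto
  let ?f = "ext_E (\<lambda>a d. Fv a d)"
  consider "p = r" "q = s" | "p = s" "q = r" | "q = r" "p \<noteq> s" | "q = s" "p \<noteq> r" | "p = r" "q \<noteq> s"
    | "p = s" "q \<noteq> r" | "p \<noteq> r" "p \<noteq> s" "q \<noteq> r" "q \<noteq> s" by blast
  then show ?thesis
  proof cases
    case 1 then show ?thesis using A_r1[OF idx(1,2) pq] by (simp add: apT_def)
  next
    case 2 then show ?thesis using A_r1[OF idx(1,2) pq] A_swap2[of p q q p] by (simp add: apT_def)
  next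
    case 3 then show ?thesis using extF[OF idx(1,4,2)] pq rs by (simp add: apT_def)
  next
    case 4 then show ?thesis using extF[OF idx(1,3,2)] A_swap2[of p q r q] pq rs by (simp add: apT_def)
  next
    case 5 then show ?thesis using extF[OF idx(2,4,1)] A_swap1[of p q p s] pq rs by (simp add: apT_def)
  next
    case 6
    have "A p q r p = A q p p r" using A_swap1[of p q r p] A_swap2[of q p r p] by simp
    then show ?thesis using 6 extF[OF idx(2,3,1)] pq rs by (simp add: apT_def)
  next
    case 7 then show ?thesis using A_r4[OF idx] pq rs by (simp add: apT_def)
  qed
qed

end

end

lemma ext_E_add: "ext_E (\<lambda>a b. f a b + g a b) x y = ext_E f x y + ext_E g x y"
  by (simp add: ext_E_def)

context setting
begin

interpretation vs: vector_space scale
  using leib unfolding leibniz_algebra_def by blast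

lemma lifts_intro:
  assumes "\<And>i j. (i, j) \<in> e_pairs n \<Longrightarrow> e i j - Eb i j \<in> I" "\<And>k. k \<in> {1..n} \<Longrightarrow> h k - Hb k \<in> I"
  shows "lifts scale br n Eb Hb X e h"
  by (intro lifts.intro setting_axioms lifts_axioms.intro assms)

lemma sumX_I: "(\<Sum>l\<in>{1..n}. scale (c l) (X l)) \<in> I"
  by (rule I_sum) (auto intro!: I_scale X_I)

lemma sumX_H: assumes "k \<in> {1..n}"
  shows "br (\<Sum>l\<in>{1..n}. scale (c l) (X l)) (Hb k) = scale (c k) XN"
proof -
  have "br (\<Sum>l\<in>{1..n}. scale (c l) (X l)) (Hb k) = (\<Sum>l\<in>{1..n}. scale (c l) (br (X l) (Hb k)))"
    by (simp only: sumL scaleL)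
  also have "\<dots> = (\<Sum>l\<in>{1..n}. if l = k then scale (c l) XN else 0)"
    by (rule sum.cong) (auto simp: XH[OF _ assms])
  also have "\<dots> = scale (c k) XN" using assms by (simp add: sum.delta)
  finally show ?thesis .
qed

lemma main_exists:
  "\<exists>E H. (\<forall>(i, j)\<in>e_pairs n. E i j - Eb i j \<in> square_ideal scale br)
             \<and> (\<forall>k\<in>{1..n}. H k - Hb k \<in> square_ideal scale br)
             \<and> (\<forall>x\<in>module.span scale ((\<lambda>(i, j). E i j) ` e_pairs n \<union> H ` {1..n}).
                 \<forall>y\<in>module.span scale ((\<lambda>(i, j). E i j) ` e_pairs n \<union> H ` {1..n}).
                   br x y \<in> module.span scale ((\<lambda>(i, j). E i j) ` e_pairs n \<union> H ` {1..n}))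
             \<and> e_table n (=) br E H"
proof -
  interpret L0: lifts scale br n Eb Hb X Eb Hb by (rule lifts_intro) auto
  define h1 where "h1 = (\<lambda>k. Hb k - (\<Sum>l\<in>{1..n}. scale (cf (br (Hb k) (Hb l))) (X l)))"
  have h1_lift: "h1 k - Hb k \<in> I" for k unfolding h1_def using sumX_I I_neg by simp
  interpret L1: lifts scale br n Eb Hb X Eb h1 by (rule lifts_intro) (auto intro: h1_lift)
  have Dz1: "br (h1 k) (h1 l) = 0" if "k \<in> {1..n}" "l \<in> {1..n}" for k l
  proof -
    have "br (h1 k) (h1 l) = br (h1 k) (Hb l)" using L1.hH[OF that(2)] .
    also have "\<dots> = br (Hb k) (Hb l) - br (\<Sum>l'\<in>{1..n}. scale (cf (br (Hb k) (Hb l'))) (X l')) (Hb l)"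
      unfolding h1_def by (simp only: diffL)
    also have "\<dots> = br (Hb k) (Hb l) - scale (cf (br (Hb k) (Hb l))) XN"
      using sumX_H[OF that(2), of "\<lambda>l'. cf (br (Hb k) (Hb l'))"] by (simp only:)
    also have "\<dots> = 0"
    proof -
      have "scale (cf (br (Hb k) (Hb l))) XN = br (Hb k) (Hb l)" by (rule sym[OF cf[OF L0.D_V0[OF that]]])
      then show ?thesis by simp
    qed
    finally show ?thesis .
  qed
  define G where "G = (\<lambda>b. dC br Eb h1 (ch b b) (ch b b) b)"
  have G_V0: "inV0 (G b)" if "b \<in> {1..n}" for b
    unfolding G_def using L1.C_V0[OF Dz1] ch[OF that that] that by blast
  define h2 where "h2 = (\<lambda>k. h1 k + G k)"
  have h2_lift: "h2 k - Hb k \<in> I" if "k \<in> {1..n}" for k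
  proof -
    have "h2 k - Hb k = (h1 k - Hb k) + G k" unfolding h2_def by simp
    moreover have "(h1 k - Hb k) + G k \<in> I" by (rule I_add[OF h1_lift V0_I[OF G_V0[OF that]]])
    ultimately show ?thesis by (simp only:)
  qed
  interpret L2: lifts scale br n Eb Hb X Eb h2 by (rule lifts_intro) (auto intro: h2_lift)
  have Dz2: "br (h2 k) (h2 l) = 0" if "k \<in> {1..n}" "l \<in> {1..n}" for k l
  proof -
    have "br (h2 k) (h2 l) = br (h2 k) (h1 l)"
      by (rule cong) (simp add: h2_def V0_I[OF G_V0[OF that(2)]])
    also have "\<dots> = br (h1 k) (h1 l) + br (G k) (h1 l)" unfolding h2_def by (simp add: addL)
    also have "\<dots> = 0" using Dz1[OF that] V0_kill[OF G_V0[OF that(1)]] by simp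
    finally show ?thesis .
  qed
  have Cz2: "dC br Eb h2 k a b = 0" if "k \<in> {1..n}" "a \<in> {1..n}" "b \<in> {1..n}" for k a b
  proof -
    have "dC br Eb h2 k a b = dC br Eb h1 k a b + br (G k) (ext_E Eb a b) + apH G a b k"
      unfolding h2_def dC_def by (simp add: addL apH_add)
    also have "br (G k) (ext_E Eb a b) = 0" using V0_kill[OF G_V0[OF that(1)]] .
    also have "dC br Eb h1 k a b = - apH G a b k"
      unfolding G_def by (rule L1.C_form[OF Dz1 that])
    finally show ?thesis by simp
  qed
  define e1 where "e1 = (\<lambda>a b. Eb a b - (\<Sum>k\<in>{1..n}. scale (cf (dB br Eb h2 a b k)) (X k)))"
  have e1_lift: "e1 a b - Eb a b \<in> I" for a b unfolding e1_def using sumX_I I_neg by simp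
  interpret L3: lifts scale br n Eb Hb X e1 h2 by (rule lifts_intro) (auto intro: e1_lift h2_lift)
  have Dz3: "br (h2 k) (h2 l) = 0" if "k \<in> {1..n}" "l \<in> {1..n}" for k l using Dz2[OF that] .
  have Cz3: "dC br e1 h2 k a b = 0" if "k \<in> {1..n}" "a \<in> {1..n}" "b \<in> {1..n}" for k a b
    using Cz2[OF that] L3.hE[OF that(2,3)] by (simp add: dC_def)
  have Bz3: "dB br e1 h2 a b k = 0" if "a \<in> {1..n}" "b \<in> {1..n}" "k \<in> {1..n}" for a b k
  proof -
    have base: "dB br e1 h2 a b k = 0" if ab: "a < b" "a \<in> {1..n}" "b \<in> {1..n}" for a b
    proof -
      have BV: "inV0 (dB br Eb h2 a b k)" by (rule L2.B_V0[OF Dz2 ab(2,3) \<open>k \<in> {1..n}\<close>])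
      have "dB br e1 h2 a b k = br (e1 a b) (h2 k) - apH h2 a b k" using ab by (simp add: dB_def ext_E_def)
      also have "br (e1 a b) (h2 k) = br (Eb a b) (h2 k) - scale (cf (dB br Eb h2 a b k)) XN"
      proof -
        have "br (e1 a b) (h2 k) = br (Eb a b) (h2 k) - br (\<Sum>k'\<in>{1..n}. scale (cf (dB br Eb h2 a b k')) (X k')) (h2 k)"
          unfolding e1_def by (simp only: diffL)
        also have "\<dots> = br (Eb a b) (h2 k) - scale (cf (dB br Eb h2 a b k)) XN"
          using L2.hH[OF \<open>k \<in> {1..n}\<close>, of "\<Sum>k'\<in>{1..n}. scale (cf (dB br Eb h2 a b k')) (X k')"]
            sumX_H[OF \<open>k \<in> {1..n}\<close>, of "\<lambda>k'. cf (dB br Eb h2 a b k')"] by (simp only:)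
        finally show ?thesis .
      qed
      finally have "dB br e1 h2 a b k = dB br Eb h2 a b k - scale (cf (dB br Eb h2 a b k)) XN"
        using ab by (simp add: dB_def ext_E_def algebra_simps)
      moreover have "scale (cf (dB br Eb h2 a b k)) XN = dB br Eb h2 a b k" by (rule sym[OF cf[OF BV]])
      ultimately show ?thesis by simp
    qed
    show ?thesis
    proof (cases a b rule: linorder_cases)
      case less then show ?thesis using base that by blast
    next
      case equal then show ?thesis by simp
    next
      case greater then show ?thesis using base[of b a] that L3.B_swap[of a b k] by simp
    qed
  qed
  define F where "F = (\<lambda>a d. dA br e1 a (ch a d) (ch a d) d)"
  have F_V0: "inV0 (F a d)" if "a \<in> {1..n}" "d \<in> {1..n}" for a d
    unfolding F_def using L3.A_V0[OF Dz3 Cz3 Bz3] ch[OF that] that by blast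
  define e2 where "e2 = (\<lambda>a b. e1 a b + F a b)"
  have e2_lift: "e2 a b - Eb a b \<in> I" if "(a, b) \<in> e_pairs n" for a b
  proof -
    have ab: "a \<in> {1..n}" "b \<in> {1..n}" using that by (auto simp: e_pairs_def)
    have "e2 a b - Eb a b = (e1 a b - Eb a b) + F a b" unfolding e2_def by simp
    moreover have "(e1 a b - Eb a b) + F a b \<in> I" by (rule I_add[OF e1_lift V0_I[OF F_V0[OF ab]]])
    ultimately show ?thesis by (simp only:)
  qed
  interpret L4: lifts scale br n Eb Hb X e2 h2 by (rule lifts_intro) (auto intro: e2_lift h2_lift)
  have Fext_V0: "inV0 (ext_E F x y)" if "x \<in> {1..n}" "y \<in> {1..n}" for x y
    using F_V0[OF that] F_V0[OF that(2,1)] V0_neg V0_0 by (auto simp: ext_E_def)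
  have ext2: "ext_E e2 x y = ext_E e1 x y + ext_E F x y" for x y
    unfolding e2_def by (rule ext_E_add)
  have T1: "br (ext_E e2 i j) (ext_E e2 k l) = apT (ext_E e2) i j k l"
    if "i \<in> {1..n}" "j \<in> {1..n}" "k \<in> {1..n}" "l \<in> {1..n}" for i j k l
  proof -
    have "br (ext_E e2 i j) (ext_E e2 k l) = br (ext_E e1 i j) (ext_E e2 k l) + br (ext_E F i j) (ext_E e2 k l)"
      by (simp add: ext2 addL)
    also have "br (ext_E F i j) (ext_E e2 k l) = 0" using V0_kill[OF Fext_V0[OF that(1,2)]] .
    also have "br (ext_E e1 i j) (ext_E e2 k l) = br (ext_E e1 i j) (ext_E e1 k l)"
      using L4.hE[OF that(3,4)] L3.hE[OF that(3,4)] by simp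
    also have "\<dots> = dA br e1 i j k l + apT (ext_E e1) i j k l" by (simp add: dA_def)
    also have "dA br e1 i j k l = apT (ext_E F) i j k l"
      unfolding F_def by (rule L3.A_form[OF Dz3 Cz3 Bz3 that])
    finally have 1: "br (ext_E e2 i j) (ext_E e2 k l) = apT (ext_E F) i j k l + apT (ext_E e1) i j k l" by simp
    have ef: "ext_E e2 = (\<lambda>a b. ext_E e1 a b + ext_E F a b)" by (intro ext) (rule ext2)
    have "apT (ext_E e2) i j k l = apT (ext_E e1) i j k l + apT (ext_E F) i j k l"
      unfolding ef by (rule apT_add)
    then show ?thesis using 1 by (simp add: add.commute)
  qed
  have T2: "br (ext_E e2 i j) (h2 k) = apH h2 i j k"
    if "i \<in> {1..n}" "j \<in> {1..n}" "k \<in> {1..n}" for i j k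
  proof -
    have "br (ext_E e2 i j) (h2 k) = br (ext_E e1 i j) (h2 k) + br (ext_E F i j) (h2 k)"
      by (simp add: ext2 addL)
    also have "br (ext_E F i j) (h2 k) = 0" using V0_kill[OF Fext_V0[OF that(1,2)]] .
    also have "br (ext_E e1 i j) (h2 k) = apH h2 i j k" using Bz3[OF that] by (simp add: dB_def)
    finally show ?thesis by simp
  qed
  have T3: "br (h2 k) (ext_E e2 i j) = - apH h2 i j k"
    if "i \<in> {1..n}" "j \<in> {1..n}" "k \<in> {1..n}" for i j k
  proof -
    have "br (h2 k) (ext_E e2 i j) = br (h2 k) (ext_E Eb i j)" using L4.hE[OF that(1,2)] .
    then show ?thesis using Cz2[OF that(3,1,2)] by (simp add: dC_def eq_neg_iff_add_eq_0)
  qed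
  have T4: "br (h2 k) (h2 l) = 0" if "k \<in> {1..n}" "l \<in> {1..n}" for k l using Dz2[OF that] .
  have gen: "br x y \<in> L4.SP" if xin: "x \<in> (\<lambda>(i, j). e2 i j) ` e_pairs n \<union> h2 ` {1..n}"
    and yin: "y \<in> (\<lambda>(i, j). e2 i j) ` e_pairs n \<union> h2 ` {1..n}" for x y
  proof -
    have Eg: "\<exists>i j. i \<in> {1..n} \<and> j \<in> {1..n} \<and> z = ext_E e2 i j"
      if zin: "z \<in> (\<lambda>(i, j). e2 i j) ` e_pairs n" for z
    proof -
      obtain p where p: "p \<in> e_pairs n" "z = (\<lambda>(i, j). e2 i j) p" using zin by blast
      obtain i j where "p = (i, j)" by (cases p)
      with p have "(i, j) \<in> e_pairs n" "z = e2 i j" by auto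
      then show ?thesis by (intro exI[of _ i] exI[of _ j]) (auto simp: e_pairs_def ext_E_def)
    qed
    show ?thesis
    proof (cases "x \<in> h2 ` {1..n}")
      case xh: True
      then obtain k where k: "k \<in> {1..n}" "x = h2 k" by auto
      show ?thesis
      proof (cases "y \<in> h2 ` {1..n}")
        case True
        then obtain l where "l \<in> {1..n}" "y = h2 l" by auto
        then show ?thesis using T4 k by (simp add: vs.span_zero)
      next
        case False
        then obtain i j where "i \<in> {1..n}" "j \<in> {1..n}" "y = ext_E e2 i j" using Eg yin by blast
        then show ?thesis using T3 k L4.hc_SP by (simp add: vs.span_neg)
      qed
    next
      case xe: False
      then obtain i j where ij: "i \<in> {1..n}" "j \<in> {1..n}" "x = ext_E e2 i j" using Eg xin by blast
      show ?thesis
      proof (cases "y \<in> h2 ` {1..n}")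
        case True
        then obtain l where "l \<in> {1..n}" "y = h2 l" by auto
        then show ?thesis using T2 ij L4.hc_SP by simp
      next
        case False
        then obtain k l where "k \<in> {1..n}" "l \<in> {1..n}" "y = ext_E e2 k l" using Eg yin by blast
        then show ?thesis using T1 ij L4.T_SP by simp
      qed
    qed
  qed
  have clos: "br x y \<in> L4.SP" if "x \<in> L4.SP" "y \<in> L4.SP" for x y
  proof -
    have gy: "br x g \<in> L4.SP" if "g \<in> (\<lambda>(i, j). e2 i j) ` e_pairs n \<union> h2 ` {1..n}" for g
    proof (induct rule: vs.span_induct[OF \<open>x \<in> L4.SP\<close>])
      case 1 show ?case unfolding vs.subspace_def
        by (auto simp: addL scaleL vs.span_zero vs.span_add vs.span_scale)
    next
      case (2 x') then show ?case using gen that by blast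
    qed
    show ?thesis
    proof (induct rule: vs.span_induct[OF \<open>y \<in> L4.SP\<close>])
      case 1 show ?case unfolding vs.subspace_def
        by (auto simp: addR scaleR vs.span_zero vs.span_add vs.span_scale)
    next
      case (2 y') then show ?case using gy by blast
    qed
  qed
  have tab: "e_table n (=) br e2 h2"
    unfolding e_table_def
  proof (intro conjI allI impI)
    fix i j k l assume a: "1 \<le> i \<and> i < j \<and> j \<le> n \<and> 1 \<le> k \<and> k < l \<and> l \<le> n"
    then show "br (e2 i j) (e2 k l) = (if j = k then ext_E e2 i l else 0) - (if j = l then ext_E e2 i k else 0)
         - (if i = k then ext_E e2 j l else 0) + (if i = l then ext_E e2 j k else 0)"
      using T1[of i j k l] by (simp add: ext_E_def apT_def)
  next
    fix i j k assume a: "1 \<le> i \<and> i < j \<and> j \<le> n \<and> 1 \<le> k \<and> k \<le> n"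
    then show "br (e2 i j) (h2 k) = (if j = k then h2 i else 0) - (if i = k then h2 j else 0)"
      using T2[of i j k] by (simp add: ext_E_def apH_def)
  next
    fix i j k assume a: "1 \<le> i \<and> i < j \<and> j \<le> n \<and> 1 \<le> k \<and> k \<le> n"
    then show "br (h2 k) (e2 i j) = (if i = k then h2 j else 0) - (if j = k then h2 i else 0)"
      using T3[of i j k] by (simp add: ext_E_def apH_def)
  next
    fix k l assume a: "1 \<le> k \<and> k \<le> n \<and> 1 \<le> l \<and> l \<le> n"
    then show "br (h2 k) (h2 l) = 0" using T4[of k l] by simp
  qed
  show ?thesis
    apply (rule exI[of _ e2], rule exI[of _ h2])
    using e2_lift h2_lift clos tab by auto
qed

end

theorem mainTheorem8:
  fixes scale :: "complex \<Rightarrow> 'a::ab_group_add \<Rightarrow> 'a"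
    and br :: "'a \<Rightarrow> 'a \<Rightarrow> 'a"
    and n :: nat
    and Eb :: "nat \<Rightarrow> nat \<Rightarrow> 'a" and Hb :: "nat \<Rightarrow> 'a" and X :: "nat \<Rightarrow> 'a"
  assumes n3: "n \<ge> 3"
    and leib: "leibniz_algebra scale br"
    \<comment> \<open>the classes of Eb i j, Hb k form a basis of L/I\<close>
    and quot_span: "module.span scale ((\<lambda>(i, j). Eb i j) ` e_pairs n \<union> Hb ` {1..n}
                       \<union> square_ideal scale br) = UNIV"
    and quot_indep: "\<And>c d. (\<Sum>(i, j)\<in>e_pairs n. scale (c i j) (Eb i j))
                       + (\<Sum>k\<in>{1..n}. scale (d k) (Hb k)) \<in> square_ideal scale br
                     \<Longrightarrow> (\<forall>(i, j)\<in>e_pairs n. c i j = 0) \<and> (\<forall>k\<in>{1..n}. d k = 0)"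
    \<comment> \<open>with these classes, L/I has the multiplication table of e(n)\<close>
    and quot_table: "e_table n (\<lambda>x y. x - y \<in> square_ideal scale br) br Eb Hb"
    \<comment> \<open>X 1, ..., X (n+1) is a basis of I\<close>
    and X_inj: "inj_on X {1..n+1}"
    and X_indep: "\<not> module.dependent scale (X ` {1..n+1})"
    and X_span: "module.span scale (X ` {1..n+1}) = square_ideal scale br"
    \<comment> \<open>the right e(n)-module structure on I\<close>
    and X_E: "\<And>m i j. 1 \<le> m \<Longrightarrow> m \<le> n + 1 \<Longrightarrow> (i, j) \<in> e_pairs n \<Longrightarrow>
               br (X m) (Eb i j) = (if m = i then X j else if m = j then - X i else 0)"
    and X_H: "\<And>m k. 1 \<le> m \<Longrightarrow> m \<le> n + 1 \<Longrightarrow> 1 \<le> k \<Longrightarrow> k \<le> n \<Longrightarrow>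
               br (X m) (Hb k) = (if m = k then X (n + 1) else 0)"
  shows "\<exists>E H. (\<forall>(i, j)\<in>e_pairs n. E i j - Eb i j \<in> square_ideal scale br)
             \<and> (\<forall>k\<in>{1..n}. H k - Hb k \<in> square_ideal scale br)
             \<and> (\<forall>x\<in>module.span scale ((\<lambda>(i, j). E i j) ` e_pairs n \<union> H ` {1..n}).
                 \<forall>y\<in>module.span scale ((\<lambda>(i, j). E i j) ` e_pairs n \<union> H ` {1..n}).
                   br x y \<in> module.span scale ((\<lambda>(i, j). E i j) ` e_pairs n \<union> H ` {1..n}))
             \<and> e_table n (=) br E H"
proof -
  interpret setting scale br n Eb Hb X
    by (rule setting.intro[OF n3 leib quot_span quot_indep quot_table X_inj X_indep X_span X_E X_H])
  show ?thesis by (rule main_exists)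
qed

end
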